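(* Order the letters by $a_1<a_2<\cdots<a_M<x_1<x_2<\cdots<x_N$. Then the labeling $\Lambda$ is an $R^*$-labeling of the poset of shuffles $W_{MN}$.
   Context: Let $P$ be a finite ranked poset with $\hat0,\hat1$ of rank $n$ and $\mathcal{M}(P)$ its set of maximal chains. A labeling $\Lambda:\mathcal{M}(P)\to L^n$ ($L$ totally ordered) is a $C$-labeling if for every maximal chain $c=(\hat0=w^0\lessdot w^1\lessdot\cdots\lessdot w^n=\hat1)$ and every $r\in[n]$, $\Lambda_r(c)$ depends only on $(w^0\lessdot\cdots\lessdot w^r)$. A $C$-labeling is an $R^*$-labeling if every chain $\hat0=w^0\lessdot w^1\lessdot\cdots\lessdot w^r<u$ has a unique completion by coverings $w^r\lessdot w^{r+1}\lessdot\cdots\lessdot w^s=u$ such that $\Lambda_{r+1}(c)<\Lambda_{r+2}(c)<\cdots<\Lambda_s(c)$, where $c$ is any maximal chain beginning with $w^0\lessdot\cdots\lessdot w^s$. Poset of shuffles: $\mathcal{A}=\{a_1,\dots,a_M\}$, $\mathcal{X}=\{x_1,\dots,x_N\}$ disjoint; a shuffle word is a word (possibly empty) with distinct letters from $\mathcal{A}\cup\mathcal{X}$ in which the letters of each alphabet appear in increasing order of subscripts; $W_{MN}$ is the set of shuffle words ordered by the reflexive-transitive closure of: $w\lessdot w'$ iff $w'$ is obtained from $w$ by deleting a letter of $\mathcal{A}$ or inserting a letter of $\mathcal{X}$; $\hat0=a_1\cdots a_M$, $\hat1=x_1\cdots x_N$. Labeling $\Lambda$: for a maximal chain $c=(\hat0=w^0\lessdot\cdots\lessdot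 w^{M+N}=\hat1)$, $\Lambda_{i+1}(c)$ is: $x_k$ if $w^{i+1}$ is obtained from $w^i$ by inserting $x_k$; $x_k$ if $w^i=u\,x_k\,a_m\,v$, $w^{i+1}=u\,x_k\,v$ and this is the first deletion along $c$, starting from $\hat0$, of a letter located immediately after $x_k$ (type (xa)); $a_j$ if $w^{i+1}$ is obtained by deleting $a_j$ and this is not of type (xa). *)

theory Defs
  imports Main
begin

text \<open>A finite poset is given by a carrier P and an order relation le on it,
  with bottom element z0 and z1 element z1.  Chains are lists.\<close>

definition covers :: "'a set \<Rightarrow> ('a \<Rightarrow> 'a \<Rightarrow> bool) \<Rightarrow> 'a \<Rightarrow> 'a \<Rightarrow> bool" where
  "covers P le x y \<longleftrightarrow> x \<in> P \<and> y \<in> P \<and> le x y \<and> x \<noteq> y \<and>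
     \<not> (\<exists>z\<in>P. le x z \<and> le z y \<and> z \<noteq> x \<and> z \<noteq> y)"

definition cover_chain :: "'a set \<Rightarrow> ('a \<Rightarrow> 'a \<Rightarrow> bool) \<Rightarrow> 'a list \<Rightarrow> bool" where
  "cover_chain P le xs \<longleftrightarrow> xs \<noteq> [] \<and> hd xs \<in> P \<and>
     (\<forall>i. Suc i < length xs \<longrightarrow> covers P le (xs ! i) (xs ! Suc i))"

definition max_chains :: "'a set \<Rightarrow> ('a \<Rightarrow> 'a \<Rightarrow> bool) \<Rightarrow> 'a \<Rightarrow> 'a \<Rightarrow> 'a list set" where
  "max_chains P le z0 z1 =
     {c. cover_chain P le c \<and> hd c = z0 \<and> last c = z1}"

text \<open>A labeling assigns to a maximal chain c and a position r in [1..n] the label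
  Lam c r of the r-th covering step (from c!(r-1) to c!r).\<close>
definition C_labeling ::
  "'a set \<Rightarrow> ('a \<Rightarrow> 'a \<Rightarrow> bool) \<Rightarrow> 'a \<Rightarrow> 'a \<Rightarrow> nat \<Rightarrow> ('a list \<Rightarrow> nat \<Rightarrow> 'l) \<Rightarrow> bool" where
  "C_labeling P le z0 z1 n Lam \<longleftrightarrow>
     (\<forall>c\<in>max_chains P le z0 z1. length c = Suc n) \<and>
     (\<forall>c\<in>max_chains P le z0 z1. \<forall>c'\<in>max_chains P le z0 z1. \<forall>r\<in>{1..n}.
        take (Suc r) c = take (Suc r) c' \<longrightarrow> Lam c r = Lam c' r)"

definition R_star_labeling ::
  "'a set \<Rightarrow> ('a \<Rightarrow> 'a \<Rightarrow> bool) \<Rightarrow> 'a \<Rightarrow> 'a \<Rightarrow> nat \<Rightarrow> ('a list \<Rightarrow> nat \<Rightarrow> 'l::linorder) \<Rightarrow> bool" where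
  "R_star_labeling P le z0 z1 n Lam \<longleftrightarrow>
     C_labeling P le z0 z1 n Lam \<and>
     (\<forall>p u. cover_chain P le p \<and> hd p = z0 \<and> u \<in> P \<and> le (last p) u \<and> last p \<noteq> u \<longrightarrow>
        (\<exists>!q. cover_chain P le q \<and> hd q = last p \<and> last q = u \<and>
           (\<forall>c\<in>max_chains P le z0 z1. take (length p + length q - 1) c = p @ tl q \<longrightarrow>
              (\<forall>j. length p - 1 < j \<and> j < length p + length q - 2 \<longrightarrow>
                  Lam c j < Lam c (Suc j)))))"

datatype letter = A nat | X nat

instantiation letter :: linorder
begin

fun less_eq_letter :: "letter \<Rightarrow> letter \<Rightarrow> bool" where
  "less_eq_letter (A i) (A j) = (i \<le> j)"
| "less_eq_letter (A i) (X j) = True"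
| "less_eq_letter (X i) (A j) = False"
| "less_eq_letter (X i) (X j) = (i \<le> j)"

definition less_letter :: "letter \<Rightarrow> letter \<Rightarrow> bool" where
  "less_letter x y \<longleftrightarrow> x \<le> y \<and> \<not> y \<le> x"

instance
proof
  fix x y z :: letter
  show "(x < y) = (x \<le> y \<and> \<not> y \<le> x)" by (simp add: less_letter_def)
  show "x \<le> x" by (cases x) auto
  show "x \<le> y \<Longrightarrow> y \<le> z \<Longrightarrow> x \<le> z" by (cases x; cases y; cases z) auto
  show "x \<le> y \<Longrightarrow> y \<le> x \<Longrightarrow> x = y" by (cases x; cases y) auto
  show "x \<le> y \<or> y \<le> x" by (cases x; cases y) auto
qed

end

fun is_A :: "letter \<Rightarrow> bool" where
  "is_A (A _) = True" | "is_A (X _) = False"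

fun is_X :: "letter \<Rightarrow> bool" where
  "is_X (A _) = False" | "is_X (X _) = True"

definition shuffle_words :: "nat \<Rightarrow> nat \<Rightarrow> letter list set" where
  "shuffle_words M N = {w. distinct w \<and>
      set w \<subseteq> A ` {1..M} \<union> X ` {1..N} \<and>
      sorted_wrt (<) (filter is_A w) \<and> sorted_wrt (<) (filter is_X w)}"

definition shuffle_step :: "letter list \<Rightarrow> letter list \<Rightarrow> bool" where
  "shuffle_step w w' \<longleftrightarrow>
     (\<exists>u v j. w = u @ A j # v \<and> w' = u @ v) \<or>
     (\<exists>u v k. w = u @ v \<and> w' = u @ X k # v)"

definition shuffle_le :: "nat \<Rightarrow> nat \<Rightarrow> letter list \<Rightarrow> letter list \<Rightarrow> bool" where
  "shuffle_le M N w w' \<longleftrightarrow>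
     (w, w') \<in> {(a, b). a \<in> shuffle_words M N \<and> b \<in> shuffle_words M N \<and> shuffle_step a b}\<^sup>*"

definition shuffle_bot :: "nat \<Rightarrow> letter list" where
  "shuffle_bot M = map A [1..<Suc M]"

definition shuffle_top :: "nat \<Rightarrow> letter list" where
  "shuffle_top N = map X [1..<Suc N]"

definition ins_X :: "nat \<Rightarrow> letter list \<Rightarrow> letter list \<Rightarrow> bool" where
  "ins_X k w w' \<longleftrightarrow> (\<exists>u v. w = u @ v \<and> w' = u @ X k # v)"

definition del_after_X :: "nat \<Rightarrow> letter list \<Rightarrow> letter list \<Rightarrow> bool" where
  "del_after_X k w w' \<longleftrightarrow> (\<exists>u y v. w = u @ X k # y # v \<and> w' = u @ X k # v)"

definition del_A :: "nat \<Rightarrow> letter list \<Rightarrow> letter list \<Rightarrow> bool" where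
  "del_A j w w' \<longleftrightarrow> (\<exists>u v. w = u @ A j # v \<and> w' = u @ v)"

definition type_xa :: "nat \<Rightarrow> letter list list \<Rightarrow> nat \<Rightarrow> bool" where
  "type_xa k c i \<longleftrightarrow>
     (\<exists>u m v. c ! i = u @ X k # A m # v \<and> c ! Suc i = u @ X k # v) \<and>
     (\<forall>j<i. \<not> del_after_X k (c ! j) (c ! Suc j))"

definition shuffle_label :: "letter list list \<Rightarrow> nat \<Rightarrow> letter" where
  "shuffle_label c r =
     (let i = r - 1 in
      if \<exists>k. ins_X k (c ! i) (c ! Suc i) then X (THE k. ins_X k (c ! i) (c ! Suc i))
      else if \<exists>k. type_xa k c i then X (THE k. type_xa k c i)
      else A (THE j. del_A j (c ! i) (c ! Suc i)))"

end

theory Submission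
  imports Defs
begin

lemma less_letter_simps[simp]:
  "(A i < A j) = (i < j)" "A i < X j" "\<not> X i < A j" "(X i < X j) = (i < j)"
  by (auto simp: less_letter_def)

lemma is_A_cases: "is_A l \<longleftrightarrow> (\<exists>m. l = A m)" by (cases l) auto
lemma is_X_cases: "is_X l \<longleftrightarrow> (\<exists>k. l = X k)" by (cases l) auto
lemma is_X_not_A: "is_X l \<longleftrightarrow> \<not> is_A l" by (cases l) auto

lemma W_distinct: "w \<in> shuffle_words M N \<Longrightarrow> distinct w"
  by (simp add: shuffle_words_def)

lemma sw_del: "sorted_wrt R (filter P (a @ e # b)) \<Longrightarrow> sorted_wrt R (filter P (a @ b))"
  by (cases "P e") (simp_all add: sorted_wrt_append)

lemma W_del: "a @ e # b \<in> shuffle_words M N \<Longrightarrow> a @ b \<in> shuffle_words M N"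
proof -
  assume a: "a @ e # b \<in> shuffle_words M N"
  have "distinct (a @ b)" using a by (simp add: shuffle_words_def)
  moreover have "set (a @ b) \<subseteq> A ` {1..M} \<union> X ` {1..N}" using a by (auto simp: shuffle_words_def)
  moreover have "sorted_wrt (<) (filter is_A (a @ b))"
    using a sw_del[of "(<)" is_A a e b] by (simp only: shuffle_words_def mem_Collect_eq)
  moreover have "sorted_wrt (<) (filter is_X (a @ b))"
    using a sw_del[of "(<)" is_X a e b] by (simp only: shuffle_words_def mem_Collect_eq)
  ultimately show ?thesis by (simp add: shuffle_words_def)
qed

definition rk :: "letter list \<Rightarrow> int" where
  "rk w = int (length (filter is_X w)) - int (length (filter is_A w))"

lemma step_rk: "shuffle_step w w' \<Longrightarrow> rk w' = rk w + 1"
  by (auto simp: shuffle_step_def rk_def)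

definition SR :: "nat \<Rightarrow> nat \<Rightarrow> (letter list \<times> letter list) set" where
  "SR M N = {(a, b). a \<in> shuffle_words M N \<and> b \<in> shuffle_words M N \<and> shuffle_step a b}"

lemma mem_SR: "(a, b) \<in> SR M N \<longleftrightarrow> a \<in> shuffle_words M N \<and> b \<in> shuffle_words M N \<and> shuffle_step a b"
  by (simp add: SR_def)

lemma le_def': "shuffle_le M N a b \<longleftrightarrow> (a, b) \<in> (SR M N)\<^sup>*"
  by (simp add: shuffle_le_def SR_def)

lemma le_rk: "shuffle_le M N a b \<Longrightarrow> rk a \<le> rk b"
  unfolding le_def'
proof (induction rule: rtrancl_induct)
  case (step y z)
  then show ?case using step_rk[of y z] by (simp add: mem_SR)
qed simp

lemma trancl_rk: "(a,b) \<in> (SR M N)\<^sup>+ \<Longrightarrow> rk a < rk b"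
proof (induction rule: trancl_induct)
  case (base y)
  then show ?case using step_rk[of a y] by (simp add: mem_SR)
next
  case (step y z)
  then show ?case using step_rk[of y z] by (simp add: mem_SR)
qed

lemma le_rk_eq: "shuffle_le M N a b \<Longrightarrow> rk a = rk b \<Longrightarrow> a = b"
proof -
  assume h: "shuffle_le M N a b" "rk a = rk b"
  have "a = b \<or> a \<noteq> b \<and> (a, b) \<in> (SR M N)\<^sup>+" using h(1) unfolding le_def'
    by (rule rtranclD)
  thus "a = b" using trancl_rk[of a b M N] h(2) by auto
qed

lemma le_trans: "shuffle_le M N a b \<Longrightarrow> shuffle_le M N b c \<Longrightarrow> shuffle_le M N a c"
  unfolding le_def' by (rule rtrancl_trans)

lemma le_step: "a \<in> shuffle_words M N \<Longrightarrow> b \<in> shuffle_words M N \<Longrightarrow> shuffle_step a b \<Longrightarrow> shuffle_le M N a b"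
  unfolding le_def' by (rule r_into_rtrancl) (simp add: mem_SR)

lemma le_refl: "shuffle_le M N a a"
  unfolding le_def' by simp

lemma covers_iff: "covers (shuffle_words M N) (shuffle_le M N) x y \<longleftrightarrow>
   x \<in> shuffle_words M N \<and> y \<in> shuffle_words M N \<and> shuffle_step x y"
proof
  assume c: "covers (shuffle_words M N) (shuffle_le M N) x y"
  hence xy: "x \<in> shuffle_words M N" "y \<in> shuffle_words M N" "shuffle_le M N x y" "x \<noteq> y"
    and no: "\<And>z. z \<in> shuffle_words M N \<Longrightarrow> shuffle_le M N x z \<Longrightarrow> shuffle_le M N z y \<Longrightarrow> z \<noteq> x \<Longrightarrow> z = y"
    unfolding covers_def by blast+
  from xy(3) have "x = y \<or> x \<noteq> y \<and> (x,y) \<in> (SR M N)\<^sup>+" unfolding le_def' by (rule rtranclD)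
  hence "(x,y) \<in> (SR M N)\<^sup>+" using xy(4) by blast
  from tranclD[OF this] obtain z where z: "(x,z) \<in> SR M N" "(z,y) \<in> (SR M N)\<^sup>*" by blast
  have zW: "z \<in> shuffle_words M N" "shuffle_step x z" using z(1) by (simp_all add: mem_SR)
  have "shuffle_le M N x z" using z(1) unfolding le_def' by (rule r_into_rtrancl)
  moreover have "shuffle_le M N z y" using z(2) unfolding le_def' .
  moreover have "z \<noteq> x" using zW step_rk[of x z] by auto
  ultimately have "z = y" using no zW by blast
  thus "x \<in> shuffle_words M N \<and> y \<in> shuffle_words M N \<and> shuffle_step x y"
    using xy zW by simp
next
  assume a: "x \<in> shuffle_words M N \<and> y \<in> shuffle_words M N \<and> shuffle_step x y"
  hence le: "shuffle_le M N x y" using le_step by blast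
  have r: "rk y = rk x + 1" using a step_rk by auto
  have ne: "x \<noteq> y" using r by auto
  have no: "\<not> (\<exists>z\<in>shuffle_words M N. shuffle_le M N x z \<and> shuffle_le M N z y \<and> z \<noteq> x \<and> z \<noteq> y)"
  proof
    assume "\<exists>z\<in>shuffle_words M N. shuffle_le M N x z \<and> shuffle_le M N z y \<and> z \<noteq> x \<and> z \<noteq> y"
    then obtain z where z: "shuffle_le M N x z" "shuffle_le M N z y" "z \<noteq> x" "z \<noteq> y" by blast
    have "rk x \<le> rk z" "rk z \<le> rk y" using z le_rk by auto
    hence "rk z = rk x \<or> rk z = rk y" using r by auto
    thus False using z le_rk_eq[of M N x z] le_rk_eq[of M N z y] by auto
  qed
  show "covers (shuffle_words M N) (shuffle_le M N) x y"
    unfolding covers_def using a le ne no by blast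
qed

definition sle :: "nat \<Rightarrow> nat \<Rightarrow> letter list \<Rightarrow> letter list \<Rightarrow> bool" where
  "sle M N z u \<longleftrightarrow> z \<in> shuffle_words M N \<and> u \<in> shuffle_words M N \<and>
     (\<forall>a\<in>set u. is_A a \<longrightarrow> a \<in> set z) \<and> (\<forall>x\<in>set z. is_X x \<longrightarrow> x \<in> set u) \<and>
     filter (\<lambda>y. y \<in> set u) z = filter (\<lambda>y. y \<in> set z) u"

lemma sle_refl: "z \<in> shuffle_words M N \<Longrightarrow> sle M N z z"
  by (simp add: sle_def)

lemma sle_step:
  assumes s: "sle M N z y" and y': "y' \<in> shuffle_words M N" and st: "shuffle_step y y'"
  shows "sle M N z y'"
  using st unfolding shuffle_step_def
proof (elim disjE exE conjE)
  fix a b j assume y: "y = a @ A j # b" and y'e: "y' = a @ b"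
  have dy: "distinct y" using s by (simp add: sle_def shuffle_words_def)
  have ez: "A j \<in> set z" using s y by (auto simp: sle_def)
  have sy': "set y' = set y - {A j}" using dy y y'e by auto
  have f1: "filter (\<lambda>w. w \<in> set y') z = filter (\<lambda>w. w \<noteq> A j) (filter (\<lambda>w. w \<in> set y) z)"
    by (simp add: filter_filter sy' conj_commute)
  have f2: "filter (\<lambda>w. w \<noteq> A j) y = y'"
  proof -
    have "filter (\<lambda>w. w \<noteq> A j) a = a" "filter (\<lambda>w. w \<noteq> A j) b = b"
      using dy y by (auto simp: filter_id_conv)
    thus ?thesis using y y'e by simp
  qed
  have f3: "filter (\<lambda>w. w \<in> set z) y' = filter (\<lambda>w. w \<noteq> A j) (filter (\<lambda>w. w \<in> set z) y)"
    by (simp add: filter_filter conj_commute flip: f2)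
  have F: "filter (\<lambda>w. w \<in> set y') z = filter (\<lambda>w. w \<in> set z) y'"
    using s unfolding f1 f3 sle_def by simp
  have Ay: "\<forall>x\<in>set y'. is_A x \<longrightarrow> x \<in> set z" using s sy' unfolding sle_def by blast
  have Xz: "\<forall>x\<in>set z. is_X x \<longrightarrow> x \<in> set y'" using s sy' unfolding sle_def by auto
  show "sle M N z y'"
    using s y' F Ay Xz unfolding sle_def by blast
next
  fix a b k assume y: "y = a @ b" and y'e: "y' = a @ X k # b"
  have dy': "distinct y'" using y' by (simp add: W_distinct)
  have xy: "X k \<notin> set y" using dy' y y'e by auto
  have xz: "X k \<notin> set z" using s xy by (auto simp: sle_def)
  have f1: "filter (\<lambda>w. w \<in> set y') z = filter (\<lambda>w. w \<in> set y) z"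
    using xz by (auto intro!: filter_cong simp: y y'e)
  have f2: "filter (\<lambda>w. w \<in> set z) y' = filter (\<lambda>w. w \<in> set z) y"
    using xz by (simp add: y y'e)
  have sy': "set y' = insert (X k) (set y)" using y y'e by auto
  have Ay: "\<forall>x\<in>set y'. is_A x \<longrightarrow> x \<in> set z" using s sy' unfolding sle_def by auto
  have Xz: "\<forall>x\<in>set z. is_X x \<longrightarrow> x \<in> set y'" using s sy' unfolding sle_def by auto
  have F: "filter (\<lambda>w. w \<in> set y') z = filter (\<lambda>w. w \<in> set z) y'"
    using s unfolding f1 f2 sle_def by simp
  show "sle M N z y'"
    using s y' F Ay Xz unfolding sle_def by blast
qed

lemma le_sle: "shuffle_le M N z u \<Longrightarrow> z \<in> shuffle_words M N \<Longrightarrow> sle M N z u"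
  unfolding le_def'
proof (induction rule: rtrancl_induct)
  case base
  then show ?case by (rule sle_refl)
next
  case (step y z)
  then show ?case using sle_step[of M N _ y z] by (simp add: mem_SR)
qed

lemma sle_W: "sle M N z u \<Longrightarrow> z \<in> shuffle_words M N \<and> u \<in> shuffle_words M N"
  by (simp add: sle_def)

lemma sle_del:
  assumes s: "sle M N z u" and z: "z = a @ e # b" and e: "e \<notin> set u"
  shows "sle M N (a @ b) u"
proof -
  have W: "a @ b \<in> shuffle_words M N" using s z W_del by (auto simp: sle_def)
  have dz: "distinct z" using s by (simp add: sle_def shuffle_words_def)
  have f1: "filter (\<lambda>y. y \<in> set u) (a @ b) = filter (\<lambda>y. y \<in> set u) z" using e z by simp
  have f2: "filter (\<lambda>y. y \<in> set (a @ b)) u = filter (\<lambda>y. y \<in> set z) u"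
    using e z by (auto intro!: filter_cong)
  have A: "\<forall>x\<in>set u. is_A x \<longrightarrow> x \<in> set (a @ b)"
  proof (intro ballI impI)
    fix x assume "x \<in> set u" "is_A x"
    hence "x \<in> set z" "x \<noteq> e" using s e unfolding sle_def by auto
    thus "x \<in> set (a @ b)" using z by auto
  qed
  have X: "\<forall>x\<in>set (a @ b). is_X x \<longrightarrow> x \<in> set u"
    using s z unfolding sle_def by auto
  have F: "filter (\<lambda>y. y \<in> set u) (a @ b) = filter (\<lambda>y. y \<in> set (a @ b)) u"
    using s unfolding f1 f2 sle_def by blast
  show ?thesis using W A X F s unfolding sle_def by blast
qed


lemma filter_ins_split:
  "distinct u \<Longrightarrow> x \<in> set u \<Longrightarrow> \<not> Q x \<Longrightarrow>
   \<exists>j. filter (\<lambda>y. Q y \<or> y = x) u = take j (filter Q u) @ x # drop j (filter Q u)"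
proof (induction u)
  case Nil thus ?case by simp
next
  case (Cons y u)
  show ?case
  proof (cases "y = x")
    case True
    hence "x \<notin> set u" using Cons.prems by simp
    hence "filter (\<lambda>y. Q y \<or> y = x) u = filter Q u" by (intro filter_cong) auto
    thus ?thesis using True Cons.prems by (intro exI[of _ 0]) simp
  next
    case False
    then obtain j where j: "filter (\<lambda>y. Q y \<or> y = x) u = take j (filter Q u) @ x # drop j (filter Q u)"
      using Cons by auto
    show ?thesis
    proof (cases "Q y")
      case True thus ?thesis using j False by (intro exI[of _ "Suc j"]) simp
    next
      case F: False thus ?thesis using j False by (intro exI[of _ j]) simp
    qed
  qed
qed

lemma filter_take_split:
  "\<exists>i. filter P (take i z) = take j (filter P z) \<and> filter P (drop i z) = drop j (filter P z)"
proof (induction z arbitrary: j)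
  case Nil thus ?case by (intro exI[of _ 0]) simp
next
  case (Cons a z)
  show ?case
  proof (cases j)
    case 0 thus ?thesis by (intro exI[of _ 0]) simp
  next
    case (Suc j')
    show ?thesis
    proof (cases "P a")
      case True
      obtain i where "filter P (take i z) = take j' (filter P z) \<and> filter P (drop i z) = drop j' (filter P z)"
        using Cons by blast
      thus ?thesis using True Suc by (intro exI[of _ "Suc i"]) simp
    next
      case False
      obtain i where "filter P (take i z) = take j (filter P z) \<and> filter P (drop i z) = drop j (filter P z)"
        using Cons by blast
      thus ?thesis using False by (intro exI[of _ "Suc i"]) simp
    qed
  qed
qed

lemma sle_ins:
  assumes s: "sle M N z u" and xu: "x \<in> set u" and xz: "x \<notin> set z"
  shows "\<exists>a b. z = a @ b \<and> sle M N (a @ x # b) u"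
proof -
  have du: "distinct u" and dz: "distinct z" using s by (simp_all add: sle_def shuffle_words_def)
  have zD: "filter (\<lambda>y. y \<in> set u) z = filter (\<lambda>y. y \<in> set z) u" using s by (simp add: sle_def)
  obtain j where j: "filter (\<lambda>y. y \<in> set z \<or> y = x) u =
      take j (filter (\<lambda>y. y \<in> set z) u) @ x # drop j (filter (\<lambda>y. y \<in> set z) u)"
    using filter_ins_split[OF du xu, of "\<lambda>y. y \<in> set z"] xz by blast
  obtain i where i: "filter (\<lambda>y. y \<in> set u) (take i z) = take j (filter (\<lambda>y. y \<in> set u) z)"
     "filter (\<lambda>y. y \<in> set u) (drop i z) = drop j (filter (\<lambda>y. y \<in> set u) z)"
    using filter_take_split by blast
  define a b where "a = take i z" and "b = drop i z"
  have zab: "z = a @ b" by (simp add: a_def b_def)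
  have set1: "set (a @ x # b) = insert x (set z)" using zab by auto
  have F: "filter (\<lambda>y. y \<in> set u) (a @ x # b) = filter (\<lambda>y. y \<in> set (a @ x # b)) u"
  proof -
    have "filter (\<lambda>y. y \<in> set u) (a @ x # b) =
        filter (\<lambda>y. y \<in> set u) a @ x # filter (\<lambda>y. y \<in> set u) b" using xu by simp
    also have "\<dots> = filter (\<lambda>y. y \<in> set z \<or> y = x) u" unfolding j a_def b_def i zD ..
    also have "\<dots> = filter (\<lambda>y. y \<in> set (a @ x # b)) u" unfolding set1 by (intro filter_cong) auto
    finally show ?thesis .
  qed
  have xA: "\<not> is_A x" using s xu xz by (auto simp: sle_def)
  have d1: "distinct (a @ x # b)" using dz zab xz by auto
  have st1: "set (a @ x # b) \<subseteq> A ` {1..M} \<union> X ` {1..N}"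
    using s xu zab unfolding sle_def shuffle_words_def by auto
  have sA: "sorted_wrt (<) (filter is_A (a @ x # b))"
  proof -
    have "filter is_A (a @ x # b) = filter is_A z" using xA zab by simp
    thus ?thesis using s by (simp add: sle_def shuffle_words_def)
  qed
  have sX: "sorted_wrt (<) (filter is_X (a @ x # b))"
  proof -
    have "filter is_X (a @ x # b) = filter is_X (filter (\<lambda>y. y \<in> set u) (a @ x # b))"
    proof -
      have "\<forall>y\<in>set (a @ x # b). is_X y \<longrightarrow> y \<in> set u" using s xu zab by (auto simp: sle_def)
      hence "filter (\<lambda>y. y \<in> set u \<and> is_X y) (a @ x # b) = filter is_X (a @ x # b)"
        by (intro filter_cong) auto
      thus ?thesis unfolding filter_filter by (rule sym)
    qed
    also have "\<dots> = filter (\<lambda>y. y \<in> set (a @ x # b)) (filter is_X u)"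
      unfolding F by (simp add: filter_filter conj_commute)
    finally have e: "filter is_X (a @ x # b) = filter (\<lambda>y. y \<in> set (a @ x # b)) (filter is_X u)" .
    have "sorted_wrt (<) (filter is_X u)" using s by (simp add: sle_def shuffle_words_def)
    thus ?thesis unfolding e by (rule sorted_wrt_filter)
  qed
  have W1: "a @ x # b \<in> shuffle_words M N" using d1 st1 sA sX by (simp add: shuffle_words_def)
  have Au: "\<forall>y\<in>set u. is_A y \<longrightarrow> y \<in> set (a @ x # b)" using s set1 by (auto simp: sle_def)
  have Xz: "\<forall>y\<in>set (a @ x # b). is_X y \<longrightarrow> y \<in> set u" using s xu zab by (auto simp: sle_def)
  have "sle M N (a @ x # b) u" using W1 Au Xz F s unfolding sle_def by blast
  thus ?thesis using zab by blast
qed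

lemma sle_eq: "sle M N z u \<Longrightarrow> set z = set u \<Longrightarrow> z = u"
proof -
  assume s: "sle M N z u" and e: "set z = set u"
  have "filter (\<lambda>y. y \<in> set u) z = z" "filter (\<lambda>y. y \<in> set z) u = u" using e by auto
  thus "z = u" using s by (simp add: sle_def)
qed

lemma sle_le: "sle M N z u \<Longrightarrow> shuffle_le M N z u"
proof (induction "card (set z - set u) + card (set u - set z)" arbitrary: z rule: less_induct)
  case less
  have dz: "distinct z" using less.prems by (simp add: sle_def shuffle_words_def)
  show ?case
  proof (cases "set z - set u = {}")
    case False
    then obtain e where e: "e \<in> set z" "e \<notin> set u" by blast
    then obtain a b where z: "z = a @ e # b" by (meson split_list)
    have eA: "is_A e" using less.prems e by (auto simp: sle_def is_X_not_A)
    then obtain m where em: "e = A m" by (auto simp: is_A_cases)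
    have s1: "sle M N (a @ b) u" using sle_del[OF less.prems z e(2)] .
    have sz1: "set (a @ b) = set z - {e}" using dz z by auto
    have c1: "card (set (a @ b) - set u) < card (set z - set u)"
    proof -
      have "set (a @ b) - set u = (set z - set u) - {e}" using sz1 by auto
      moreover have "card ((set z - set u) - {e}) < card (set z - set u)"
        using e by (intro card_Diff1_less) auto
      ultimately show ?thesis by simp
    qed
    have c2: "set u - set (a @ b) = set u - set z" using sz1 e by auto
    have le1: "shuffle_le M N (a @ b) u" using less.hyps[OF _ s1] c1 c2 by simp
    have "shuffle_step z (a @ b)" unfolding shuffle_step_def z em by blast
    hence "shuffle_le M N z (a @ b)" using less.prems s1 by (intro le_step) (simp_all add: sle_def)
    thus ?thesis using le1 le_trans by blast
  next
    case T1: True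
    show ?thesis
    proof (cases "set u - set z = {}")
      case True
      hence "z = u" using T1 sle_eq[OF less.prems] by blast
      thus ?thesis by (simp add: le_refl)
    next
      case False
      then obtain x where x: "x \<in> set u" "x \<notin> set z" by blast
      obtain a b where ab: "z = a @ b" "sle M N (a @ x # b) u" using sle_ins[OF less.prems x] by blast
      have xA: "\<not> is_A x" using less.prems x by (auto simp: sle_def)
      then obtain k where xk: "x = X k" by (cases x) auto
      have sz1: "set (a @ x # b) = insert x (set z)" using ab by auto
      have c1: "set (a @ x # b) - set u = set z - set u" using sz1 x by auto
      have c2: "card (set u - set (a @ x # b)) < card (set u - set z)"
      proof -
        have "set u - set (a @ x # b) = (set u - set z) - {x}" using sz1 by auto
        moreover have "card ((set u - set z) - {x}) < card (set u - set z)"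
          using x by (intro card_Diff1_less) auto
        ultimately show ?thesis by simp
      qed
      have le1: "shuffle_le M N (a @ x # b) u" using less.hyps[OF _ ab(2)] c1 c2 by simp
      have "shuffle_step z (a @ x # b)" unfolding shuffle_step_def ab(1) xk by blast
      hence "shuffle_le M N z (a @ x # b)" using less.prems ab(2) by (intro le_step) (simp_all add: sle_def)
      thus ?thesis using le1 le_trans by blast
    qed
  qed
qed

lemma le_iff_sle: "z \<in> shuffle_words M N \<Longrightarrow> shuffle_le M N z u \<longleftrightarrow> sle M N z u"
  using le_sle sle_le by blast

lemma sorted_map_X: "sorted_wrt (<) (map X [1..<Suc N])"
  by (simp add: sorted_wrt_map del: upt_Suc)

lemma sorted_map_A: "sorted_wrt (<) (map A [1..<Suc M])"
  by (simp add: sorted_wrt_map del: upt_Suc)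

lemma top_W: "shuffle_top N \<in> shuffle_words M N"
proof -
  have "filter is_A (map X [1..<Suc N]) = []" by (induction N) auto
  moreover have "filter is_X (map X [1..<Suc N]) = map X [1..<Suc N]" by (induction N) auto
  moreover have "distinct (map X [1..<Suc N])" by (simp add: distinct_map inj_on_def)
  moreover have "set (map X [1..<Suc N]) \<subseteq> A ` {1..M} \<union> X ` {1..N}" by auto
  ultimately show ?thesis using sorted_map_X by (simp add: shuffle_top_def shuffle_words_def)
qed

lemma bot_W: "shuffle_bot M \<in> shuffle_words M N"
proof -
  have "filter is_X (map A [1..<Suc M]) = []" by (induction M) auto
  moreover have "filter is_A (map A [1..<Suc M]) = map A [1..<Suc M]" by (induction M) auto
  moreover have "distinct (map A [1..<Suc M])" by (simp add: distinct_map inj_on_def)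
  moreover have "set (map A [1..<Suc M]) \<subseteq> A ` {1..M} \<union> X ` {1..N}" by auto
  ultimately show ?thesis using sorted_map_A by (simp add: shuffle_bot_def shuffle_words_def)
qed

lemma sle_top: assumes u: "u \<in> shuffle_words M N" shows "sle M N u (shuffle_top N)"
proof -
  let ?t = "map X [1..<Suc N]"
  have st: "set ?t = X ` {1..N}" by auto
  have uW: "set u \<subseteq> A ` {1..M} \<union> X ` {1..N}" "distinct u" "sorted_wrt (<) (filter is_X u)"
    using u by (simp_all add: shuffle_words_def)
  have f1: "filter (\<lambda>y. y \<in> set ?t) u = filter is_X u"
  proof (intro filter_cong refl)
    fix y assume "y \<in> set u" thus "(y \<in> set ?t) = is_X y" using uW(1) st by auto
  qed
  have s2: "sorted_wrt (<) (filter (\<lambda>y. y \<in> set u) ?t)" using sorted_map_X by (rule sorted_wrt_filter)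
  have "filter is_X u = filter (\<lambda>y. y \<in> set u) ?t"
  proof (rule sorted_distinct_set_unique)
    show "sorted (filter is_X u)" "distinct (filter is_X u)" using uW(3) by (simp_all add: strict_sorted_iff)
    show "sorted (filter (\<lambda>y. y \<in> set u) ?t)" "distinct (filter (\<lambda>y. y \<in> set u) ?t)"
      using s2 by (simp_all add: strict_sorted_iff)
    show "set (filter is_X u) = set (filter (\<lambda>y. y \<in> set u) ?t)"
      using uW(1) st by (auto simp: is_X_cases)
  qed
  hence F: "filter (\<lambda>y. y \<in> set ?t) u = filter (\<lambda>y. y \<in> set u) ?t" using f1 by simp
  have Au: "\<forall>y\<in>set ?t. is_A y \<longrightarrow> y \<in> set u" by auto
  have Xu: "\<forall>y\<in>set u. is_X y \<longrightarrow> y \<in> set ?t" using uW(1) st by (auto simp: is_X_cases)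
  show ?thesis unfolding sle_def shuffle_top_def using u top_W[of N M] F Au Xu
    by (simp add: shuffle_top_def)
qed


lemma dsplit: "distinct (a @ x # b) \<Longrightarrow> a @ x # b = c @ x # d \<Longrightarrow> a = c \<and> b = d"
proof -
  assume d: "distinct (a @ x # b)" and e: "a @ x # b = c @ x # d"
  have "x \<notin> set a" using d by simp
  moreover have "distinct (c @ x # d)" using d e by simp
  hence "x \<notin> set c" by simp
  moreover have "x \<notin> set b" using d by simp
  ultimately show ?thesis using e append_Cons_eq_iff[of x a b c d] by blast
qed

lemma del_elem_eq: "distinct w \<Longrightarrow> w = a @ x # b \<Longrightarrow> w = c @ y # d \<Longrightarrow> a @ b = c @ d \<Longrightarrow> x = y"
proof (rule ccontr)
  assume d: "distinct w" and w1: "w = a @ x # b" and w2: "w = c @ y # d" and e: "a @ b = c @ d" and ne: "x \<noteq> y"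
  have "x \<notin> set (a @ b)" using d w1 by auto
  moreover have "x \<in> set w" using w1 by simp
  hence "x \<in> set (c @ y # d)" using w2 by simp
  hence "x \<in> set (c @ d)" using ne by simp
  ultimately show False using e by simp
qed

lemma adj_del: "a @ e # b = c @ x # y # d \<Longrightarrow> e \<noteq> x \<Longrightarrow> e \<noteq> y \<Longrightarrow> \<exists>c' d'. a @ b = c' @ x # y # d'"
proof (induction a arbitrary: c)
  case Nil
  show ?case
  proof (cases c)
    case Nil thus ?thesis using Nil.prems by simp
  next
    case (Cons c0 cs)
    hence "b = cs @ x # y # d" using Nil.prems by simp
    thus ?thesis by (intro exI[of _ cs] exI[of _ d]) simp
  qed
next
  case (Cons a0 as)
  show ?case
  proof (cases c)
    case Nil
    hence h: "a0 = x" "as @ e # b = y # d" using Cons.prems by simp_all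
    show ?thesis
    proof (cases as)
      case Nil thus ?thesis using h Cons.prems by simp
    next
      case (Cons a1 as')
      hence "a1 = y" "d = as' @ e # b" using h by simp_all
      thus ?thesis using h Cons by (intro exI[of _ "[]"] exI[of _ "as' @ b"]) simp
    qed
  next
    case (Cons c0 cs)
    hence h: "a0 = c0" "as @ e # b = cs @ x # y # d" using Cons.prems by simp_all
    obtain c' d' where "as @ b = c' @ x # y # d'" using Cons.IH[OF h(2) Cons.prems(2,3)] by blast
    thus ?thesis by (intro exI[of _ "a0 # c'"] exI[of _ d']) simp
  qed
qed

lemma adj_del_rev: "a @ b = c @ x # y # d \<Longrightarrow> (\<exists>c' d'. a @ e # b = c' @ x # y # d') \<or> (a = c @ [x] \<and> b = y # d)"
proof (induction a arbitrary: c)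
  case Nil
  thus ?case by (intro disjI1 exI[of _ "e # c"] exI[of _ d]) simp
next
  case (Cons a0 as)
  show ?case
  proof (cases c)
    case Nil
    hence h: "a0 = x" "as @ b = y # d" using Cons.prems by simp_all
    show ?thesis
    proof (cases as)
      case Nil thus ?thesis using h \<open>c = []\<close> by simp
    next
      case (Cons a1 as')
      hence "a1 = y" "d = as' @ b" using h by simp_all
      hence "(a0 # as) @ e # b = [] @ x # y # (as' @ e # b)" using h Cons by simp
      thus ?thesis by blast
    qed
  next
    case (Cons c0 cs)
    hence h: "a0 = c0" "as @ b = cs @ x # y # d" using Cons.prems by simp_all
    from Cons.IH[OF h(2)] show ?thesis
    proof
      assume "\<exists>c' d'. as @ e # b = c' @ x # y # d'"
      then obtain c' d' where "as @ e # b = c' @ x # y # d'" by blast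
      hence "(a0 # as) @ e # b = (a0 # c') @ x # y # d'" by simp
      thus ?thesis by blast
    next
      assume "as = cs @ [x] \<and> b = y # d"
      thus ?thesis using h \<open>c = c0 # cs\<close> by simp
    qed
  qed
qed

lemma adj_unique: "distinct z \<Longrightarrow> z = a @ x # y # b \<Longrightarrow> z = c @ x # y' # d \<Longrightarrow> y = y' \<and> a = c"
proof -
  assume d: "distinct z" and z1: "z = a @ x # y # b" and z2: "z = c @ x # y' # d"
  have dd: "distinct (a @ x # (y # b))" using d z1 by simp
  have eq: "a @ x # (y # b) = c @ x # (y' # d)" using z1 z2 by simp
  have "a = c \<and> y # b = y' # d" using dsplit[OF dd eq] .
  thus ?thesis by simp
qed

lemma pred_unique: "distinct z \<Longrightarrow> z = a @ x # y # b \<Longrightarrow> z = c @ x' # y # d \<Longrightarrow> x = x' \<and> a = c"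
proof -
  assume d: "distinct z" and z1: "z = a @ x # y # b" and z2: "z = c @ x' # y # d"
  have eq: "(a @ [x]) @ y # b = (c @ [x']) @ y # d" using z1 z2 by simp
  have dd: "distinct ((a @ [x]) @ y # b)" using d z1 by simp
  have "a @ [x] = c @ [x']" using dsplit[OF dd eq] by blast
  thus ?thesis by simp
qed

lemma sorted_adj: "z \<in> shuffle_words M N \<Longrightarrow> z = a @ X k # X k' # b \<Longrightarrow> k < k'"
proof -
  assume "z \<in> shuffle_words M N" "z = a @ X k # X k' # b"
  hence "sorted_wrt (<) (filter is_X a @ X k # X k' # filter is_X b)"
    by (simp add: shuffle_words_def)
  hence "X k < X k'" by (simp add: sorted_wrt_append)
  thus ?thesis by simp
qed

definition xa :: "nat set \<Rightarrow> nat \<Rightarrow> letter list \<Rightarrow> letter list \<Rightarrow> bool" where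
  "xa NF k w w' \<longleftrightarrow> (\<exists>u m v. w = u @ X k # A m # v \<and> w' = u @ X k # v) \<and> k \<notin> NF"

definition slab :: "nat set \<Rightarrow> letter list \<Rightarrow> letter list \<Rightarrow> letter" where
  "slab NF w w' = (if \<exists>k. ins_X k w w' then X (THE k. ins_X k w w')
      else if \<exists>k. xa NF k w w' then X (THE k. xa NF k w w')
      else A (THE j. del_A j w w'))"

definition nfn :: "nat set \<Rightarrow> letter list \<Rightarrow> letter list \<Rightarrow> nat set" where
  "nfn NF w w' = NF \<union> {k. del_after_X k w w'}"

definition freshpred :: "nat set \<Rightarrow> letter list \<Rightarrow> letter \<Rightarrow> bool" where
  "freshpred NF z d \<longleftrightarrow> (\<exists>a b k. z = a @ X k # d # b \<and> k \<notin> NF)"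

lemma ins_X_unique: "distinct (a @ X k # b) \<Longrightarrow> ins_X k' (a @ b) (a @ X k # b) \<Longrightarrow> k' = k"
proof -
  assume d: "distinct (a @ X k # b)" and i: "ins_X k' (a @ b) (a @ X k # b)"
  then obtain u v where uv: "a @ b = u @ v" "a @ X k # b = u @ X k' # v" by (auto simp: ins_X_def)
  have "X k = X k'" using del_elem_eq[OF d refl uv(2)] uv(1) by simp
  thus ?thesis by simp
qed

lemma slab_ins: "distinct (a @ X k # b) \<Longrightarrow> slab NF (a @ b) (a @ X k # b) = X k"
proof -
  assume d: "distinct (a @ X k # b)"
  have ex: "ins_X k (a @ b) (a @ X k # b)" unfolding ins_X_def by blast
  have th: "(THE k'. ins_X k' (a @ b) (a @ X k # b)) = k"
    using ins_X_unique[OF d] ex by (rule the_equality[rotated])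
  have "\<exists>k'. ins_X k' (a @ b) (a @ X k # b)" using ex by blast
  thus ?thesis unfolding slab_def th by (rule if_P)
qed

lemma not_ins_del: "\<not> ins_X k (a @ e # b) (a @ b)"
proof
  assume "ins_X k (a @ e # b) (a @ b)"
  then obtain u v where uv: "a @ e # b = u @ v" "a @ b = u @ X k # v" unfolding ins_X_def by blast
  have "length (a @ e # b) = length u + length v" using uv(1) by (metis length_append)
  moreover have "length (a @ b) = length u + Suc (length v)" using uv(2) by (metis length_append length_Cons)
  ultimately show False by simp
qed

lemma xa_del: "distinct (a @ A m # b) \<Longrightarrow> xa NF k (a @ A m # b) (a @ b) \<longleftrightarrow> (\<exists>a'. a = a' @ [X k]) \<and> k \<notin> NF"
proof
  assume d: "distinct (a @ A m # b)" and x: "xa NF k (a @ A m # b) (a @ b)"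
  then obtain u m' v where uv: "a @ A m # b = u @ X k # A m' # v" "a @ b = u @ X k # v" and k: "k \<notin> NF"
    unfolding xa_def by blast
  have uv2: "a @ A m # b = (u @ [X k]) @ A m' # v" "a @ b = (u @ [X k]) @ v" using uv by simp_all
  have "A m = A m'" using del_elem_eq[OF d refl uv2(1) uv2(2)] .
  hence "a = u @ [X k]" using dsplit[OF d] uv2(1) by simp
  thus "(\<exists>a'. a = a' @ [X k]) \<and> k \<notin> NF" using k by blast
next
  assume "(\<exists>a'. a = a' @ [X k]) \<and> k \<notin> NF"
  then obtain a' where a': "a = a' @ [X k]" "k \<notin> NF" by blast
  show "xa NF k (a @ A m # b) (a @ b)" unfolding xa_def a'(1)
    by (intro conjI exI[of _ a'] exI[of _ m] exI[of _ b]) (simp_all add: a'(2))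
qed

lemma del_A_unique: "distinct (a @ A m # b) \<Longrightarrow> del_A j (a @ A m # b) (a @ b) \<Longrightarrow> j = m"
proof -
  assume d: "distinct (a @ A m # b)" and i: "del_A j (a @ A m # b) (a @ b)"
  then obtain u v where uv: "a @ A m # b = u @ A j # v" "a @ b = u @ v" unfolding del_A_def by blast
  have "A m = A j" using del_elem_eq[OF d refl uv(1) uv(2)] .
  thus ?thesis by simp
qed

lemma freshpred_split: "distinct (a @ d # b) \<Longrightarrow> freshpred NF (a @ d # b) d \<longleftrightarrow> (\<exists>a' k. a = a' @ [X k] \<and> k \<notin> NF)"
proof
  assume dd: "distinct (a @ d # b)" and f: "freshpred NF (a @ d # b) d"
  then obtain a'' b'' k where e: "a @ d # b = a'' @ X k # d # b''" "k \<notin> NF" unfolding freshpred_def by blast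
  hence "a @ d # b = (a'' @ [X k]) @ d # b''" by simp
  hence "a = a'' @ [X k]" using dsplit[OF dd] by blast
  thus "\<exists>a' k. a = a' @ [X k] \<and> k \<notin> NF" using e by blast
next
  assume "\<exists>a' k. a = a' @ [X k] \<and> k \<notin> NF"
  then obtain a' k where a': "a = a' @ [X k]" "k \<notin> NF" by blast
  show "freshpred NF (a @ d # b) d" unfolding freshpred_def a'(1)
    by (intro exI[of _ a'] exI[of _ b] exI[of _ k]) (simp add: a'(2))
qed

lemma slab_del_fresh: "distinct (a @ X k # A m # b) \<Longrightarrow> k \<notin> NF \<Longrightarrow> slab NF (a @ X k # A m # b) (a @ X k # b) = X k"
proof -
  assume d: "distinct (a @ X k # A m # b)" and k: "k \<notin> NF"
  have d': "distinct ((a @ [X k]) @ A m # b)" using d by simp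
  have e: "xa NF k' ((a @ [X k]) @ A m # b) ((a @ [X k]) @ b) \<longleftrightarrow> k' = k" for k'
    using xa_del[OF d', of NF k'] k by auto
  have e': "xa NF k' (a @ X k # A m # b) (a @ X k # b) \<longleftrightarrow> k' = k" for k'
    using e[of k'] by simp
  have ni: "\<not> ins_X k' ((a @ [X k]) @ A m # b) ((a @ [X k]) @ b)" for k'
    by (rule not_ins_del)
  have ni': "\<not> (\<exists>k'. ins_X k' (a @ X k # A m # b) (a @ X k # b))" using ni by simp
  have ex: "\<exists>k'. xa NF k' (a @ X k # A m # b) (a @ X k # b)" using e' by blast
  have th: "(THE k'. xa NF k' (a @ X k # A m # b) (a @ X k # b)) = k" using e' by simp
  show ?thesis unfolding slab_def using ni' ex th by presburger
qed

lemma slab_del_nf: "distinct (a @ A m # b) \<Longrightarrow> \<not> freshpred NF (a @ A m # b) (A m) \<Longrightarrow> slab NF (a @ A m # b) (a @ b) = A m"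
proof -
  assume d: "distinct (a @ A m # b)" and f: "\<not> freshpred NF (a @ A m # b) (A m)"
  have nx: "\<not> (\<exists>k. xa NF k (a @ A m # b) (a @ b))"
    using xa_del[OF d] freshpred_split[OF d] f by blast
  have ni: "\<not> (\<exists>k. ins_X k (a @ A m # b) (a @ b))" using not_ins_del by blast
  have "del_A m (a @ A m # b) (a @ b)" unfolding del_A_def by blast
  hence th: "(THE j. del_A j (a @ A m # b) (a @ b)) = m" using del_A_unique[OF d] by (rule the_equality)
  show ?thesis unfolding slab_def using nx ni th by presburger
qed

lemma nfn_ins: "nfn NF (a @ b) (a @ X k # b) = NF"
proof -
  have "\<not> del_after_X j (a @ b) (a @ X k # b)" for j
  proof
    assume "del_after_X j (a @ b) (a @ X k # b)"
    then obtain u y v where "a @ b = u @ X j # y # v" "a @ X k # b = u @ X j # v" by (auto simp: del_after_X_def)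
    hence "length (a @ b) = length (a @ X k # b) + 1" by simp
    thus False by simp
  qed
  thus ?thesis by (simp add: nfn_def)
qed

lemma nfn_del: "distinct (a @ A m # b) \<Longrightarrow> nfn NF (a @ A m # b) (a @ b) = NF \<union> {k. \<exists>a'. a = a' @ [X k]}"
proof -
  assume d: "distinct (a @ A m # b)"
  have "del_after_X k (a @ A m # b) (a @ b) \<longleftrightarrow> (\<exists>a'. a = a' @ [X k])" for k
  proof
    assume "del_after_X k (a @ A m # b) (a @ b)"
    then obtain u y v where uv: "a @ A m # b = u @ X k # y # v" "a @ b = u @ X k # v" by (auto simp: del_after_X_def)
    have uv2: "a @ A m # b = (u @ [X k]) @ y # v" "a @ b = (u @ [X k]) @ v" using uv by simp_all
    have "A m = y" using del_elem_eq[OF d refl uv2(1) uv2(2)] .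
    hence "a = u @ [X k]" using dsplit[OF d] uv2(1) by simp
    thus "\<exists>a'. a = a' @ [X k]" by blast
  next
    assume "\<exists>a'. a = a' @ [X k]"
    then obtain a' where a': "a = a' @ [X k]" by blast
    show "del_after_X k (a @ A m # b) (a @ b)" unfolding del_after_X_def a'
      by (intro exI[of _ a'] exI[of _ "A m"] exI[of _ b]) simp
  qed
  thus ?thesis by (simp add: nfn_def)
qed

definition nfq :: "nat set \<Rightarrow> letter list list \<Rightarrow> nat \<Rightarrow> nat set" where
  "nfq NF q i = NF \<union> {k. \<exists>j<i. del_after_X k (q ! j) (q ! Suc j)}"

lemma type_xa_eq: "type_xa k c i = xa (nfq {} c i) k (c ! i) (c ! Suc i)"
  by (auto simp: type_xa_def xa_def nfq_def)

lemma shuffle_label_slab: "shuffle_label c (Suc i) = slab (nfq {} c i) (c ! i) (c ! Suc i)"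
  by (simp add: shuffle_label_def slab_def type_xa_eq)


definition Dset :: "letter list \<Rightarrow> letter list \<Rightarrow> letter set" where
  "Dset z u = {d. d \<in> set z \<and> is_A d \<and> d \<notin> set u}"
definition Fset :: "nat set \<Rightarrow> letter list \<Rightarrow> letter list \<Rightarrow> letter set" where
  "Fset NF z u = {d. d \<in> Dset z u \<and> \<not> freshpred NF z d}"
definition Kset :: "nat set \<Rightarrow> letter list \<Rightarrow> letter list \<Rightarrow> nat set" where
  "Kset NF z u = {k. X k \<in> set u \<and> X k \<notin> set z} \<union>
     {k. k \<notin> NF \<and> (\<exists>a d b. z = a @ X k # d # b \<and> d \<in> Dset z u)}"
definition cl :: "nat set \<Rightarrow> letter list \<Rightarrow> letter list \<Rightarrow> letter" where
  "cl NF z u = (if Fset NF z u \<noteq> {} then Min (Fset NF z u) else X (Min (Kset NF z u)))"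

lemma inD: "d \<in> Dset z u \<longleftrightarrow> d \<in> set z \<and> is_A d \<and> d \<notin> set u"
  by (simp add: Dset_def)
lemma inF: "d \<in> Fset NF z u \<longleftrightarrow> d \<in> Dset z u \<and> \<not> freshpred NF z d"
  by (simp add: Fset_def)
lemma inK_I: "X k \<in> set u \<Longrightarrow> X k \<notin> set z \<Longrightarrow> k \<in> Kset NF z u"
  by (simp add: Kset_def)
lemma inK_D: "k \<notin> NF \<Longrightarrow> z = a @ X k # d # b \<Longrightarrow> d \<in> Dset z u \<Longrightarrow> k \<in> Kset NF z u"
  unfolding Kset_def by blast
lemma K_cases: "k \<in> Kset NF z u \<Longrightarrow> (X k \<in> set u \<and> X k \<notin> set z) \<or> (k \<notin> NF \<and> (\<exists>a d b. z = a @ X k # d # b \<and> d \<in> Dset z u))"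
  unfolding Kset_def by blast
lemma fp_intro: "z = a @ X k # d # b \<Longrightarrow> k \<notin> NF \<Longrightarrow> freshpred NF z d"
  unfolding freshpred_def by blast
lemma fp_elim: "freshpred NF z d \<Longrightarrow> \<exists>a b k. z = a @ X k # d # b \<and> k \<notin> NF"
  unfolding freshpred_def by blast

lemma finite_F: "finite (Fset NF z u)"
proof -
  have "Fset NF z u \<subseteq> set z" by (auto simp: Fset_def Dset_def)
  thus ?thesis using finite_subset by blast
qed

lemma finite_K: "finite (Kset NF z u)"
proof -
  have "Kset NF z u \<subseteq> X -` (set u \<union> set z)" unfolding Kset_def by auto
  moreover have "finite (X -` (set u \<union> set z))" by (rule finite_vimageI) (auto simp: inj_def)
  ultimately show ?thesis using finite_subset by blast
qed

lemma cl_le_F: "d \<in> Fset NF z u \<Longrightarrow> cl NF z u \<le> d"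
proof -
  assume d: "d \<in> Fset NF z u"
  hence "Fset NF z u \<noteq> {}" by blast
  thus ?thesis using d finite_F by (simp add: cl_def)
qed

lemma cl_F: "Fset NF z u \<noteq> {} \<Longrightarrow> cl NF z u \<in> Fset NF z u \<and> (\<forall>d\<in>Fset NF z u. cl NF z u \<le> d)"
  using finite_F by (simp add: cl_def)

lemma isA_lt_X: "is_A c \<Longrightarrow> c < X k"
  by (cases c) auto

lemma cl_le_K: "k \<in> Kset NF z u \<Longrightarrow> cl NF z u \<le> X k"
proof (cases "Fset NF z u = {}")
  case True
  assume k: "k \<in> Kset NF z u"
  hence "Min (Kset NF z u) \<le> k" using finite_K by simp
  thus ?thesis using True by (simp add: cl_def)
next
  case False
  hence "cl NF z u \<in> Fset NF z u" using cl_F by blast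
  hence "is_A (cl NF z u)" by (simp add: Fset_def Dset_def)
  thus ?thesis using isA_lt_X less_imp_le by blast
qed

lemma cl_K: "Fset NF z u = {} \<Longrightarrow> Kset NF z u \<noteq> {} \<Longrightarrow>
   cl NF z u = X (Min (Kset NF z u)) \<and> Min (Kset NF z u) \<in> Kset NF z u \<and> (\<forall>k\<in>Kset NF z u. Min (Kset NF z u) \<le> k)"
  using finite_K by (simp add: cl_def)

lemma K_ne: assumes s: "sle M N z u" and ne: "z \<noteq> u" and F: "Fset NF z u = {}"
  shows "Kset NF z u \<noteq> {}"
proof -
  have "set z \<noteq> set u" using sle_eq[OF s] ne by blast
  then consider (a) x where "x \<in> set u" "x \<notin> set z" | (b) d where "d \<in> set z" "d \<notin> set u" by blast
  thus ?thesis
  proof cases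
    case a
    hence "\<not> is_A x" using s by (auto simp: sle_def)
    then obtain k where "x = X k" by (cases x) auto
    thus ?thesis using a inK_I by blast
  next
    case b
    hence "is_A d" using s by (auto simp: sle_def is_X_not_A)
    hence dD: "d \<in> Dset z u" using b by (simp add: inD)
    hence "freshpred NF z d" using F by (auto simp: Fset_def)
    then obtain a b k where "z = a @ X k # d # b" "k \<notin> NF" using fp_elim by blast
    thus ?thesis using inK_D[OF _ _ dD] by blast
  qed
qed

lemma sle_dist: "sle M N z u \<Longrightarrow> distinct z \<and> distinct u"
  by (simp add: sle_def shuffle_words_def)

definition valid :: "nat \<Rightarrow> nat \<Rightarrow> letter list \<Rightarrow> letter list \<Rightarrow> letter list \<Rightarrow> bool" where
  "valid M N z u z1 \<longleftrightarrow> z1 \<in> shuffle_words M N \<and> shuffle_step z z1 \<and> sle M N z1 u"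

lemma label_cases:
  assumes s: "sle M N z u" and v: "valid M N z u z1"
  shows "(\<exists>a b m. z = a @ A m # b \<and> z1 = a @ b \<and> A m \<in> Dset z u \<and> \<not> freshpred NF z (A m) \<and>
            slab NF z z1 = A m \<and> nfn NF z z1 = NF \<union> {k. \<exists>a'. a = a' @ [X k]}) \<or>
         (\<exists>a b k m. z = a @ X k # A m # b \<and> z1 = a @ X k # b \<and> A m \<in> Dset z u \<and> k \<notin> NF \<and>
            slab NF z z1 = X k \<and> nfn NF z z1 = NF \<union> {k}) \<or>
         (\<exists>a b k. z = a @ b \<and> z1 = a @ X k # b \<and> X k \<in> set u \<and> X k \<notin> set z \<and>
            slab NF z z1 = X k \<and> nfn NF z z1 = NF)"
proof -
  have dz: "distinct z" using s by (simp add: sle_def shuffle_words_def)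
  have dz1: "distinct z1" using v by (simp add: valid_def shuffle_words_def)
  have s1: "sle M N z1 u" using v by (simp add: valid_def)
  have st: "shuffle_step z z1" using v by (simp add: valid_def)
  show ?thesis using st unfolding shuffle_step_def
  proof (elim disjE exE conjE)
    fix a b j assume z: "z = a @ A j # b" and z1: "z1 = a @ b"
    have "A j \<notin> set u"
    proof
      assume "A j \<in> set u"
      hence "A j \<in> set z1" using s1 by (auto simp: sle_def)
      thus False using dz z z1 by auto
    qed
    hence jD: "A j \<in> Dset z u" using z by (simp add: inD)
    have dz': "distinct (a @ A j # b)" using dz z by simp
    show ?thesis
    proof (cases "freshpred NF z (A j)")
      case False
      have "slab NF z z1 = A j" using slab_del_nf[OF dz'] False z z1 by simp
      moreover have "nfn NF z z1 = NF \<union> {k. \<exists>a'. a = a' @ [X k]}" using nfn_del[OF dz'] z z1 by simp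
      ultimately show ?thesis using z z1 jD False by blast
    next
      case True
      then obtain a' k where a': "a = a' @ [X k]" "k \<notin> NF" using freshpred_split[OF dz'] z by blast
      have z': "z = a' @ X k # A j # b" and z1': "z1 = a' @ X k # b" using z z1 a' by simp_all
      have d'': "distinct (a' @ X k # A j # b)" using dz z' by simp
      have "slab NF z z1 = X k" using slab_del_fresh[OF d'' a'(2)] z' z1' by simp
      moreover have "nfn NF z z1 = NF \<union> {k}" using nfn_del[OF dz'] z z1 a' by auto
      ultimately show ?thesis using z' z1' jD a'(2) by blast
    qed
  next
    fix a b k assume z: "z = a @ b" and z1: "z1 = a @ X k # b"
    have "X k \<in> set u" using s1 z1 by (auto simp: sle_def)
    moreover have "X k \<notin> set z" using dz1 z z1 by auto
    moreover have "slab NF z z1 = X k" using slab_ins dz1 z z1 by simp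
    moreover have "nfn NF z z1 = NF" using nfn_ins z z1 by simp
    ultimately show ?thesis using z z1 by blast
  qed
qed

lemma step_ins: "shuffle_step (a @ b) (a @ X k # b)"
  unfolding shuffle_step_def by blast
lemma step_del: "shuffle_step (a @ A j # b) (a @ b)"
  unfolding shuffle_step_def by blast
lemma valid_intro: "shuffle_step z z1 \<Longrightarrow> sle M N z1 u \<Longrightarrow> valid M N z u z1"
  by (simp add: valid_def sle_def)

lemma valid_sle: "valid M N z u z1 \<Longrightarrow> sle M N z1 u"
  by (simp add: valid_def)

lemma E1:
  assumes s: "sle M N z u" and ne: "z \<noteq> u"
  shows "\<exists>z1. valid M N z u z1 \<and> slab NF z z1 = cl NF z u"
proof (cases "Fset NF z u = {}")
  case False
  have c: "cl NF z u \<in> Fset NF z u" using cl_F[OF False] by blast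
  hence cz: "cl NF z u \<in> set z" "is_A (cl NF z u)" "cl NF z u \<notin> set u" "\<not> freshpred NF z (cl NF z u)"
    by (simp_all add: inF inD)
  then obtain m where m: "cl NF z u = A m" by (auto simp: is_A_cases)
  obtain a b where z: "z = a @ A m # b" using cz(1) m by (metis split_list)
  have dz: "distinct (a @ A m # b)" using sle_dist[OF s] z by simp
  have s1: "sle M N (a @ b) u" using sle_del[OF s z] cz(3) m by simp
  have "valid M N z u (a @ b)" using valid_intro[OF _ s1] step_del z by simp
  moreover have "slab NF z (a @ b) = cl NF z u" using slab_del_nf[OF dz] cz(4) m z by simp
  ultimately show ?thesis by blast
next
  case True
  have Kne: "Kset NF z u \<noteq> {}" using K_ne[OF s ne True] .
  define k0 where "k0 = Min (Kset NF z u)"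
  have cK: "cl NF z u = X k0" "k0 \<in> Kset NF z u" using cl_K[OF True Kne] k0_def by simp_all
  from K_cases[OF cK(2)] show ?thesis
  proof
    assume h: "X k0 \<in> set u \<and> X k0 \<notin> set z"
    then obtain a b where ab: "z = a @ b" "sle M N (a @ X k0 # b) u" using sle_ins[OF s] by blast
    have d1: "distinct (a @ X k0 # b)" using sle_dist[OF ab(2)] by simp
    have "valid M N z u (a @ X k0 # b)" using valid_intro[OF _ ab(2)] step_ins ab(1) by simp
    moreover have "slab NF z (a @ X k0 # b) = cl NF z u" using slab_ins[OF d1] ab(1) cK(1) by simp
    ultimately show ?thesis by blast
  next
    assume h: "k0 \<notin> NF \<and> (\<exists>a d b. z = a @ X k0 # d # b \<and> d \<in> Dset z u)"
    then obtain a d b where z: "z = a @ X k0 # d # b" and dD: "d \<in> Dset z u" by blast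
    from dD obtain m where m: "d = A m" and du: "d \<notin> set u" by (auto simp: inD is_A_cases)
    have z': "z = (a @ [X k0]) @ A m # b" using z m by simp
    have dz: "distinct (a @ X k0 # A m # b)" using sle_dist[OF s] z m by simp
    have s1: "sle M N ((a @ [X k0]) @ b) u" using sle_del[OF s z'] du m by simp
    have "valid M N z u (a @ X k0 # b)" using valid_intro[OF _ s1] step_del[of "a @ [X k0]" m b] z' by simp
    moreover have "slab NF z (a @ X k0 # b) = cl NF z u" using slab_del_fresh[OF dz] h z m cK(1) by simp
    ultimately show ?thesis by blast
  qed
qed

lemma M1a:
  assumes s: "sle M N z u" and v: "valid M N z u z1"
  shows "cl NF z u \<le> slab NF z z1"
  using label_cases[OF s v, of NF]
proof (elim disjE exE conjE)
  fix a b m assume "z = a @ A m # b" "A m \<in> Dset z u" "\<not> freshpred NF z (A m)" "slab NF z z1 = A m"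
  thus ?thesis using cl_le_F by (simp add: inF)
next
  fix a b k m assume "z = a @ X k # A m # b" "A m \<in> Dset z u" "k \<notin> NF" "slab NF z z1 = X k"
  thus ?thesis using cl_le_K inK_D by metis
next
  fix a b k assume "X k \<in> set u" "X k \<notin> set z" "slab NF z z1 = X k"
  thus ?thesis using cl_le_K inK_I by metis
qed

lemma ins_unique:
  assumes s: "sle M N z u" and z1: "z = a1 @ b1" and z2: "z = a2 @ b2"
    and s1: "sle M N (a1 @ X k0 # b1) u" and s2: "sle M N (a2 @ X k0 # b2) u"
    and xz: "X k0 \<notin> set z" and F: "Fset NF z u = {}" and K: "\<forall>k\<in>Kset NF z u. k0 \<le> k"
    and len: "length a1 < length a2"
  shows False
proof -
  obtain us where us: "a1 @ us = a2" "b1 = us @ b2"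
  proof -
    from z1 z2 have "a1 @ b1 = a2 @ b2" by simp
    then obtain us where "a1 = a2 @ us \<and> us @ b1 = b2 \<or> a1 @ us = a2 \<and> b1 = us @ b2"
      unfolding append_eq_append_conv2 by blast
    moreover have "\<not> (a1 = a2 @ us)" if "us @ b1 = b2" using len by auto
    ultimately show ?thesis using that by blast
  qed
  have "us \<noteq> []" using us len by auto
  then obtain e m' where em: "us = e # m'" by (cases us) auto
  let ?P = "\<lambda>y. y \<in> set u"
  have xu: "X k0 \<in> set u" using s1 by (auto simp: sle_def)
  have e1: "set (a1 @ X k0 # b1) = insert (X k0) (set z)" unfolding z1 by auto
  have e2: "set (a2 @ X k0 # b2) = insert (X k0) (set z)" unfolding z2 by auto
  have set12: "set (a1 @ X k0 # b1) = set (a2 @ X k0 # b2)" by (simp only: e1 e2)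
  have f1: "filter ?P (a1 @ X k0 # b1) = filter ?P (a2 @ X k0 # b2)"
  proof -
    have "filter ?P (a1 @ X k0 # b1) = filter (\<lambda>y. y \<in> set (a1 @ X k0 # b1)) u" using s1 unfolding sle_def by blast
    also have "\<dots> = filter (\<lambda>y. y \<in> set (a2 @ X k0 # b2)) u" unfolding set12 ..
    also have "\<dots> = filter ?P (a2 @ X k0 # b2)" using s2 unfolding sle_def by (rule conjE) (elim conjE, rule sym)
    finally show ?thesis .
  qed
  have a2e: "a2 = a1 @ e # m'" and b1e: "b1 = e # m' @ b2" using us em by simp_all
  have "filter ?P (a1 @ X k0 # e # m' @ b2) = filter ?P (a1 @ (e # m') @ X k0 # b2)"
    using f1 unfolding a2e b1e by simp
  hence f2p: "filter ?P (X k0 # e # m' @ b2) = filter ?P ((e # m') @ X k0 # b2)" by simp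
  have h1: "filter ?P (X k0 # e # m' @ b2) = X k0 # filter ?P (e # m' @ b2)" using xu by simp
  have h2: "filter ?P (X k0 # b2) = X k0 # filter ?P b2" using xu by simp
  have f2: "X k0 # filter ?P (e # m' @ b2) = filter ?P (e # m') @ X k0 # filter ?P b2"
    using f2p unfolding h1 filter_append h2 .
  have fe: "filter ?P (e # m') = []"
  proof (rule ccontr)
    assume "filter ?P (e # m') \<noteq> []"
    then obtain y ys where yy: "filter ?P (e # m') = y # ys" by (cases "filter ?P (e # m')") auto
    have "y = X k0" using f2 yy by simp
    moreover have "y \<in> set (filter ?P (e # m'))" using yy by simp
    hence "y \<in> set (e # m')" by (simp only: set_filter) blast
    moreover have "set (e # m') \<subseteq> set z" using z2 us em by auto
    ultimately show False using xz by auto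
  qed
  hence eu: "e \<notin> set u" by (simp split: if_splits)
  have ez: "e \<in> set z" using z2 us em by auto
  have eA: "is_A e" using s eu ez by (auto simp: sle_def is_X_not_A)
  have eD: "e \<in> Dset z u" using eu ez eA by (simp add: inD)
  hence "freshpred NF z e" using F by (auto simp: Fset_def)
  then obtain c d k where cd: "z = c @ X k # e # d" "k \<notin> NF" using fp_elim by blast
  have kK: "k \<in> Kset NF z u" using inK_D[OF cd(2) cd(1) eD] .
  have zz: "z = a1 @ e # (m' @ b2)" using z2 us em by simp
  have dz: "distinct z" using sle_dist[OF s] by simp
  have "(c @ [X k]) @ e # d = a1 @ e # (m' @ b2)" using cd(1) zz by simp
  hence "c @ [X k] = a1" using dsplit[of "c @ [X k]" e d a1 "m' @ b2"] dz cd(1) by simp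
  hence "a1 @ X k0 # b1 = c @ X k # X k0 # (e # m' @ b2)" using us em by simp
  hence "k < k0" using sorted_adj s1 by (metis sle_def)
  thus False using K kK by auto
qed


lemma shapeF:
  assumes s: "sle M N z u" and v: "valid M N z u z1" and F: "Fset NF z u \<noteq> {}"
    and l: "slab NF z z1 = cl NF z u"
  shows "\<exists>a b m. z = a @ A m # b \<and> z1 = a @ b \<and> \<not> freshpred NF z (A m) \<and> cl NF z u = A m \<and>
           nfn NF z z1 = NF \<union> {k. \<exists>a'. a = a' @ [X k]}"
proof -
  have cA: "is_A (cl NF z u)" using cl_F[OF F] by (simp add: inF inD)
  from label_cases[OF s v, of NF] show ?thesis
  proof (elim disjE exE conjE)
    fix a b m assume "z = a @ A m # b" "z1 = a @ b" "\<not> freshpred NF z (A m)" "slab NF z z1 = A m"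
      "nfn NF z z1 = NF \<union> {k. \<exists>a'. a = a' @ [X k]}"
    thus ?thesis using l by auto
  next
    fix a b k m assume "slab NF z z1 = X k"
    hence False using l cA by simp
    thus ?thesis ..
  next
    fix a b k assume "slab NF z z1 = X k"
    hence False using l cA by simp
    thus ?thesis ..
  qed
qed

lemma shapeK:
  assumes s: "sle M N z u" and v: "valid M N z u z1" and F: "Fset NF z u = {}"
    and l: "slab NF z z1 = X k0"
  shows "(\<exists>a b m. z = a @ X k0 # A m # b \<and> z1 = a @ X k0 # b \<and> A m \<in> Dset z u \<and> k0 \<notin> NF \<and> nfn NF z z1 = NF \<union> {k0}) \<or>
         (\<exists>a b. z = a @ b \<and> z1 = a @ X k0 # b \<and> X k0 \<in> set u \<and> X k0 \<notin> set z \<and> nfn NF z z1 = NF)"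
proof -
  from label_cases[OF s v, of NF] show ?thesis
  proof (elim disjE exE conjE)
    fix a b m assume "A m \<in> Dset z u" "\<not> freshpred NF z (A m)"
    hence "A m \<in> Fset NF z u" by (simp add: inF)
    hence False using F by simp
    thus ?thesis ..
  next
    fix a b k m assume h: "z = a @ X k # A m # b" "z1 = a @ X k # b" "A m \<in> Dset z u" "k \<notin> NF"
      "slab NF z z1 = X k" "nfn NF z z1 = NF \<union> {k}"
    hence "k = k0" using l by simp
    thus ?thesis using h by blast
  next
    fix a b k assume h: "z = a @ b" "z1 = a @ X k # b" "X k \<in> set u" "X k \<notin> set z"
      "slab NF z z1 = X k" "nfn NF z z1 = NF"
    hence "k = k0" using l by simp
    thus ?thesis using h by blast
  qed
qed

lemma M1b:
  assumes s: "sle M N z u" and ne: "z \<noteq> u" and v1: "valid M N z u z1" and v2: "valid M N z u z2"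
    and l1: "slab NF z z1 = cl NF z u" and l2: "slab NF z z2 = cl NF z u"
  shows "z1 = z2"
proof -
  have dz: "distinct z" using sle_dist[OF s] by simp
  show ?thesis
  proof (cases "Fset NF z u = {}")
    case False
    obtain a1 b1 m1 where h1: "z = a1 @ A m1 # b1" "z1 = a1 @ b1" "cl NF z u = A m1"
      using shapeF[OF s v1 False l1] by blast
    obtain a2 b2 m2 where h2: "z = a2 @ A m2 # b2" "z2 = a2 @ b2" "cl NF z u = A m2"
      using shapeF[OF s v2 False l2] by blast
    have "m1 = m2" using h1 h2 by simp
    hence "a1 = a2 \<and> b1 = b2" using dsplit[of a1 "A m1" b1 a2 b2] dz h1 h2 by simp
    thus ?thesis using h1 h2 by simp
  next
    case True
    have Kne: "Kset NF z u \<noteq> {}" using K_ne[OF s ne True] .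
    define k0 where "k0 = Min (Kset NF z u)"
    have cK: "cl NF z u = X k0" "k0 \<in> Kset NF z u" "\<forall>k\<in>Kset NF z u. k0 \<le> k"
      using cl_K[OF True Kne] k0_def by simp_all
    have S1: "(\<exists>a b m. z = a @ X k0 # A m # b \<and> z1 = a @ X k0 # b \<and> A m \<in> Dset z u \<and> k0 \<notin> NF \<and> nfn NF z z1 = NF \<union> {k0}) \<or>
         (\<exists>a b. z = a @ b \<and> z1 = a @ X k0 # b \<and> X k0 \<in> set u \<and> X k0 \<notin> set z \<and> nfn NF z z1 = NF)"
      using shapeK[OF s v1 True] l1 cK(1) by simp
    have S2: "(\<exists>a b m. z = a @ X k0 # A m # b \<and> z2 = a @ X k0 # b \<and> A m \<in> Dset z u \<and> k0 \<notin> NF \<and> nfn NF z z2 = NF \<union> {k0}) \<or>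
         (\<exists>a b. z = a @ b \<and> z2 = a @ X k0 # b \<and> X k0 \<in> set u \<and> X k0 \<notin> set z \<and> nfn NF z z2 = NF)"
      using shapeK[OF s v2 True] l2 cK(1) by simp
    show ?thesis
    proof (cases "X k0 \<in> set z")
      case True
      then obtain a1 b1 m1 where h1: "z = a1 @ X k0 # A m1 # b1" "z1 = a1 @ X k0 # b1" using S1 by blast
      obtain a2 b2 m2 where h2: "z = a2 @ X k0 # A m2 # b2" "z2 = a2 @ X k0 # b2" using S2 True by blast
      have "A m1 = A m2 \<and> a1 = a2" using adj_unique[OF dz h1(1) h2(1)] .
      hence "a1 = a2" "b1 = b2" using h1(1) h2(1) by simp_all
      thus ?thesis using h1 h2 by simp
    next
      case False
      then obtain a1 b1 where h1: "z = a1 @ b1" "z1 = a1 @ X k0 # b1" using S1 by auto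
      obtain a2 b2 where h2: "z = a2 @ b2" "z2 = a2 @ X k0 # b2" using S2 False by auto
      have s1: "sle M N (a1 @ X k0 # b1) u" using valid_sle[OF v1] h1 by simp
      have s2: "sle M N (a2 @ X k0 # b2) u" using valid_sle[OF v2] h2 by simp
      have "\<not> length a1 < length a2" using ins_unique[OF s h1(1) h2(1) s1 s2 False True cK(3)] by blast
      moreover have "\<not> length a2 < length a1" using ins_unique[OF s h2(1) h1(1) s2 s1 False True cK(3)] by blast
      ultimately have "length a1 = length a2" by simp
      hence "a1 = a2 \<and> b1 = b2" using h1(1) h2(1) by (simp add: append_eq_append_conv)
      thus ?thesis using h1 h2 by simp
    qed
  qed
qed

lemma cl_not_F: "Fset NF z u = {} \<Longrightarrow> cl NF z u = X (Min (Kset NF z u))"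
  by (simp add: cl_def)

lemma E2:
  assumes s: "sle M N z u" and ne: "z \<noteq> u" and NFs: "NF \<subseteq> {k. X k \<in> set z}"
    and v: "valid M N z u z1" and l: "slab NF z z1 = cl NF z u" and ne1: "z1 \<noteq> u"
  shows "cl NF z u < cl (nfn NF z z1) z1 u"
proof -
  have dz: "distinct z" using sle_dist[OF s] by simp
  have s1: "sle M N z1 u" using valid_sle[OF v] .
  have dz1: "distinct z1" using sle_dist[OF s1] by simp
  have z1W: "z1 \<in> shuffle_words M N" using s1 by (simp add: sle_def)
  define NF1 where "NF1 = nfn NF z z1"
  show ?thesis unfolding NF1_def[symmetric]
  proof (cases "Fset NF z u = {}")
    case False
    have cF: "\<forall>d\<in>Fset NF z u. cl NF z u \<le> d" using cl_F[OF False] by blast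
    obtain a b m where z: "z = a @ A m # b" and z1: "z1 = a @ b" and nf: "\<not> freshpred NF z (A m)"
      and cm: "cl NF z u = A m" and nfn: "NF1 = NF \<union> {k. \<exists>a'. a = a' @ [X k]}"
      using shapeF[OF s v False l] NF1_def by blast
    have NF1: "NF1 = NF"
    proof -
      have "k \<in> NF" if "a = a' @ [X k]" for a' k
      proof (rule ccontr)
        assume "k \<notin> NF"
        moreover have "z = a' @ X k # A m # b" using z that by simp
        ultimately have "freshpred NF z (A m)" using fp_intro by blast
        thus False using nf by simp
      qed
      thus ?thesis using nfn by blast
    qed
    show "cl NF z u < cl NF1 z1 u"
    proof (cases "Fset NF1 z1 u = {}")
      case True
      thus ?thesis using cm cl_not_F[OF True] by simp
    next
      case F1: False
      define d where "d = cl NF1 z1 u"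
      have dF1: "d \<in> Fset NF1 z1 u" using cl_F[OF F1] d_def by blast
      hence d1: "d \<in> set z1" "is_A d" "d \<notin> set u" "\<not> freshpred NF z1 d" using NF1 by (simp_all add: inF inD)
      have dz': "d \<in> set z" using d1(1) z z1 by auto
      have dne: "d \<noteq> A m" using d1(1) dz z z1 by auto
      show "cl NF z u < d"
      proof (rule ccontr)
        assume "\<not> cl NF z u < d"
        hence lt: "d < A m" using dne cm by auto
        have dD: "d \<in> Dset z u" using dz' d1 by (simp add: inD)
        have "d \<notin> Fset NF z u" using cF cm lt by auto
        hence "freshpred NF z d" using dD by (simp add: inF)
        then obtain c e k where ck: "z = c @ X k # d # e" "k \<notin> NF" using fp_elim by blast
        have "a @ A m # b = c @ X k # d # e" using z ck by simp
        then obtain c' e' where "a @ b = c' @ X k # d # e'" using adj_del dne by (metis letter.distinct(1))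
        hence "freshpred NF z1 d" using fp_intro ck(2) z1 by blast
        thus False using d1(4) by simp
      qed
    qed
  next
    case True
    have Kne: "Kset NF z u \<noteq> {}" using K_ne[OF s ne True] .
    define k0 where "k0 = Min (Kset NF z u)"
    have cK: "cl NF z u = X k0" "k0 \<in> Kset NF z u" "\<forall>k\<in>Kset NF z u. k0 \<le> k"
      using cl_K[OF True Kne] k0_def by simp_all
    have S: "(\<exists>a b m. z = a @ X k0 # A m # b \<and> z1 = a @ X k0 # b \<and> A m \<in> Dset z u \<and> k0 \<notin> NF \<and> NF1 = NF \<union> {k0}) \<or>
         (\<exists>a b. z = a @ b \<and> z1 = a @ X k0 # b \<and> X k0 \<in> set u \<and> X k0 \<notin> set z \<and> NF1 = NF)"
      using shapeK[OF s v True] l cK(1) NF1_def by simp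
    have key: "Fset NF1 z1 u = {} \<and> (\<forall>k\<in>Kset NF1 z1 u. k0 < k)"
      using S
    proof (elim disjE exE conjE)
      fix a b m assume z: "z = a @ X k0 # A m # b" and z1: "z1 = a @ X k0 # b" and mD: "A m \<in> Dset z u"
        and k0N: "k0 \<notin> NF" and N1: "NF1 = NF \<union> {k0}"
      have z': "z = (a @ [X k0]) @ A m # b" and z1': "z1 = (a @ [X k0]) @ b" using z z1 by simp_all
      have D1D: "d \<in> Dset z u \<and> d \<noteq> A m" if "d \<in> Dset z1 u" for d
        using that z z1 dz by (auto simp: inD)
      have F1: "Fset NF1 z1 u = {}"
      proof (rule ccontr)
        assume "Fset NF1 z1 u \<noteq> {}"
        then obtain d where dF1: "d \<in> Fset NF1 z1 u" by blast
        hence dD1: "d \<in> Dset z1 u" and nfp: "\<not> freshpred NF1 z1 d" by (simp_all add: inF)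
        have dD: "d \<in> Dset z u" "d \<noteq> A m" using D1D[OF dD1] by simp_all
        hence "freshpred NF z d" using True by (auto simp: inF)
        then obtain c e k where ck: "z = c @ X k # d # e" "k \<notin> NF" using fp_elim by blast
        have kk0: "k \<noteq> k0"
        proof
          assume "k = k0"
          hence "d = A m" using adj_unique[OF dz z] ck(1) by metis
          thus False using dD(2) by simp
        qed
        have "(a @ [X k0]) @ A m # b = c @ X k # d # e" using z' ck by simp
        then obtain c' e' where "(a @ [X k0]) @ b = c' @ X k # d # e'" using adj_del dD(2) by (metis letter.distinct(1))
        hence "freshpred NF1 z1 d" using fp_intro[of z1 c' k d e' NF1] ck(2) kk0 N1 z1' by simp
        thus False using nfp by simp
      qed
      have K1: "\<forall>k\<in>Kset NF1 z1 u. k0 < k"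
      proof
        fix k assume kK1: "k \<in> Kset NF1 z1 u"
        from K_cases[OF kK1] show "k0 < k"
        proof
          assume h: "X k \<in> set u \<and> X k \<notin> set z1"
          hence "X k \<notin> set z" using z z1 by auto
          hence "k \<in> Kset NF z u" using h inK_I by blast
          hence "k0 \<le> k" using cK(3) by blast
          moreover have "k \<noteq> k0" using h z1 by auto
          ultimately show ?thesis by simp
        next
          assume "k \<notin> NF1 \<and> (\<exists>a d b. z1 = a @ X k # d # b \<and> d \<in> Dset z1 u)"
          then obtain c d e where h: "k \<notin> NF1" "z1 = c @ X k # d # e" "d \<in> Dset z1 u" by blast
          have kk: "k \<noteq> k0" "k \<notin> NF" using h(1) N1 by auto
          have dD: "d \<in> Dset z u" using D1D[OF h(3)] by simp
          have "(a @ [X k0]) @ b = c @ X k # d # e" using z1' h(2) by simp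
          from adj_del_rev[OF this, of "A m"] show ?thesis
          proof
            assume "\<exists>c' d'. (a @ [X k0]) @ A m # b = c' @ X k # d # d'"
            then obtain c' d' where "z = c' @ X k # d # d'" using z' by auto
            hence "k \<in> Kset NF z u" using inK_D[OF kk(2) _ dD] by blast
            thus ?thesis using cK(3) kk(1) by force
          next
            assume "a @ [X k0] = c @ [X k] \<and> b = d # e"
            hence "k = k0" by simp
            thus ?thesis using kk(1) by simp
          qed
        qed
      qed
      show ?thesis using F1 K1 by blast
    next
      fix a b assume z: "z = a @ b" and z1: "z1 = a @ X k0 # b" and xu: "X k0 \<in> set u"
        and xz: "X k0 \<notin> set z" and N1: "NF1 = NF"
      have k0N: "k0 \<notin> NF" using NFs xz by auto
      have D1D: "d \<in> Dset z u" if "d \<in> Dset z1 u" for d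
        using that z z1 by (auto simp: inD)
      have F1: "Fset NF1 z1 u = {}"
      proof (rule ccontr)
        assume "Fset NF1 z1 u \<noteq> {}"
        then obtain d where dF1: "d \<in> Fset NF1 z1 u" by blast
        hence dD1: "d \<in> Dset z1 u" and nfp: "\<not> freshpred NF1 z1 d" by (simp_all add: inF)
        have dD: "d \<in> Dset z u" using D1D[OF dD1] .
        hence "freshpred NF z d" using True by (auto simp: inF)
        then obtain c e k where ck: "z = c @ X k # d # e" "k \<notin> NF" using fp_elim by blast
        have "a @ b = c @ X k # d # e" using z ck by simp
        from adj_del_rev[OF this, of "X k0"] have "freshpred NF1 z1 d"
        proof
          assume "\<exists>c' d'. a @ X k0 # b = c' @ X k # d # d'"
          then obtain c' d' where "z1 = c' @ X k # d # d'" using z1 by auto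
          thus ?thesis using fp_intro ck(2) N1 by blast
        next
          assume "a = c @ [X k] \<and> b = d # e"
          hence "z1 = (c @ [X k]) @ X k0 # d # e" using z1 by simp
          thus ?thesis using fp_intro k0N N1 by blast
        qed
        thus False using nfp by simp
      qed
      have K1: "\<forall>k\<in>Kset NF1 z1 u. k0 < k"
      proof
        fix k assume kK1: "k \<in> Kset NF1 z1 u"
        from K_cases[OF kK1] show "k0 < k"
        proof
          assume h: "X k \<in> set u \<and> X k \<notin> set z1"
          hence "X k \<notin> set z" using z z1 by auto
          hence "k \<in> Kset NF z u" using h inK_I by blast
          hence "k0 \<le> k" using cK(3) by blast
          moreover have "k \<noteq> k0" using h z1 by auto
          ultimately show ?thesis by simp
        next
          assume "k \<notin> NF1 \<and> (\<exists>a d b. z1 = a @ X k # d # b \<and> d \<in> Dset z1 u)"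
          then obtain c d e where h: "k \<notin> NF1" "z1 = c @ X k # d # e" "d \<in> Dset z1 u" by blast
          have kN: "k \<notin> NF" using h(1) N1 by simp
          have dD: "d \<in> Dset z u" using D1D[OF h(3)] .
          have dA: "is_A d" using dD by (simp add: inD)
          show ?thesis
          proof (cases "k = k0")
            case True
            have "a @ X k0 # b = c @ X k0 # d # e" using z1 h(2) True by simp
            hence ac: "a = c" "b = d # e" using dsplit[of a "X k0" b c "d # e"] dz1 z1 by simp_all
            hence zz: "z = a @ d # e" using z by simp
            have "freshpred NF z d" using dD \<open>Fset NF z u = {}\<close> by (auto simp: inF)
            then obtain a' k' where a': "a = a' @ [X k']" "k' \<notin> NF"
              using freshpred_split[of a d e NF] zz dz by auto
            have "z = a' @ X k' # d # e" using zz a' by simp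
            hence "k' \<in> Kset NF z u" using inK_D[OF a'(2) _ dD] by blast
            hence "k0 \<le> k'" using cK(3) by blast
            moreover have "z1 = a' @ X k' # X k0 # (d # e)" using z1 ac a' by simp
            hence "k' < k0" using sorted_adj z1W by blast
            ultimately show ?thesis by simp
          next
            case False
            have "a @ X k0 # b = c @ X k # d # e" using z1 h(2) by simp
            then obtain c' e' where "a @ b = c' @ X k # d # e'"
              using adj_del False dA by (metis is_A.simps(2) letter.inject(2))
            hence "k \<in> Kset NF z u" using inK_D[OF kN _ dD] z by blast
            thus ?thesis using cK(3) False by force
          qed
        qed
      qed
      show ?thesis using F1 K1 by blast
    qed
    have K1ne: "Kset NF1 z1 u \<noteq> {}" using K_ne[OF s1 ne1] key by blast
    have "cl NF1 z1 u = X (Min (Kset NF1 z1 u))" "Min (Kset NF1 z1 u) \<in> Kset NF1 z1 u"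
      using cl_K[of NF1 z1 u] key K1ne by simp_all
    thus "cl NF z u < cl NF1 z1 u" using key cK(1) by simp
  qed
qed

lemma M2:
  assumes s: "sle M N z u" and ne: "z \<noteq> u" and NFs: "NF \<subseteq> {k. X k \<in> set z}"
    and v: "valid M N z u z1" and l: "slab NF z z1 \<noteq> cl NF z u" and ne1: "z1 \<noteq> u"
  shows "cl (nfn NF z z1) z1 u \<le> slab NF z z1"
proof -
  have dz: "distinct z" using sle_dist[OF s] by simp
  have s1: "sle M N z1 u" using valid_sle[OF v] .
  have dz1: "distinct z1" using sle_dist[OF s1] by simp
  have lt: "cl NF z u < slab NF z z1" using M1a[OF s v, of NF] l by simp
  define NF1 where "NF1 = nfn NF z z1"
  have LC: "(\<exists>a b m. z = a @ A m # b \<and> z1 = a @ b \<and> A m \<in> Dset z u \<and> \<not> freshpred NF z (A m) \<and>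
            slab NF z z1 = A m \<and> NF1 = NF \<union> {k. \<exists>a'. a = a' @ [X k]}) \<or>
         (\<exists>a b k m. z = a @ X k # A m # b \<and> z1 = a @ X k # b \<and> A m \<in> Dset z u \<and> k \<notin> NF \<and>
            slab NF z z1 = X k \<and> NF1 = NF \<union> {k}) \<or>
         (\<exists>a b k. z = a @ b \<and> z1 = a @ X k # b \<and> X k \<in> set u \<and> X k \<notin> set z \<and>
            slab NF z z1 = X k \<and> NF1 = NF)"
    using label_cases[OF s v, of NF] NF1_def by simp
  show ?thesis unfolding NF1_def[symmetric]
  proof (cases "Fset NF z u = {}")
    case False
    have cF: "cl NF z u \<in> Fset NF z u" using cl_F[OF False] by blast
    define c where "c = cl NF z u"
    have c: "c \<in> set z" "is_A c" "c \<notin> set u" "\<not> freshpred NF z c" using cF c_def by (simp_all add: inF inD)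
    have main: "c \<in> set z1 \<and> (freshpred NF1 z1 c \<longrightarrow> (\<exists>k. k \<in> Kset NF1 z1 u \<and> slab NF z z1 = X k))"
      using LC
    proof (elim disjE exE conjE)
      fix a b m assume z: "z = a @ A m # b" and z1: "z1 = a @ b" and nf: "\<not> freshpred NF z (A m)"
        and sl: "slab NF z z1 = A m" and N1: "NF1 = NF \<union> {k. \<exists>a'. a = a' @ [X k]}"
      have cm: "c \<noteq> A m" using sl l c_def by simp
      have cz1: "c \<in> set z1" using c(1) z z1 cm by auto
      have "\<not> freshpred NF1 z1 c"
      proof
        assume "freshpred NF1 z1 c"
        then obtain a' b' k where h: "z1 = a' @ X k # c # b'" "k \<notin> NF1" using fp_elim by blast
        have "a @ b = a' @ X k # c # b'" using z1 h by simp
        from adj_del_rev[OF this, of "A m"] show False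
        proof
          assume "\<exists>c' d'. a @ A m # b = c' @ X k # c # d'"
          then obtain c' d' where "z = c' @ X k # c # d'" using z by auto
          hence "freshpred NF z c" using fp_intro h(2) N1 by blast
          thus False using c(4) by simp
        next
          assume "a = a' @ [X k] \<and> b = c # b'"
          hence "k \<in> NF1" using N1 by blast
          thus False using h(2) by simp
        qed
      qed
      thus ?thesis using cz1 by blast
    next
      fix a b k m assume z: "z = a @ X k # A m # b" and z1: "z1 = a @ X k # b" and kN: "k \<notin> NF"
        and sl: "slab NF z z1 = X k" and N1: "NF1 = NF \<union> {k}"
      have cm: "c \<noteq> A m"
      proof
        assume "c = A m"
        hence "freshpred NF z c" using fp_intro z kN by blast
        thus False using c(4) by simp
      qed
      have cz1: "c \<in> set z1" using c(1) z z1 cm c(2) by auto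
      have "\<not> freshpred NF1 z1 c"
      proof
        assume "freshpred NF1 z1 c"
        then obtain a' b' k' where h: "z1 = a' @ X k' # c # b'" "k' \<notin> NF1" using fp_elim by blast
        have "(a @ [X k]) @ b = a' @ X k' # c # b'" using z1 h by simp
        from adj_del_rev[OF this, of "A m"] show False
        proof
          assume "\<exists>c' d'. (a @ [X k]) @ A m # b = c' @ X k' # c # d'"
          then obtain c' d' where "z = c' @ X k' # c # d'" using z by auto
          hence "freshpred NF z c" using fp_intro h(2) N1 by blast
          thus False using c(4) by simp
        next
          assume "a @ [X k] = a' @ [X k'] \<and> b = c # b'"
          hence "k' \<in> NF1" using N1 by simp
          thus False using h(2) by simp
        qed
      qed
      thus ?thesis using cz1 by blast
    next
      fix a b j assume z: "z = a @ b" and z1: "z1 = a @ X j # b" and sl: "slab NF z z1 = X j"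
        and N1: "NF1 = NF"
      have cz1: "c \<in> set z1" using c(1) z z1 by auto
      have "\<exists>k. k \<in> Kset NF1 z1 u \<and> slab NF z z1 = X k" if fp: "freshpred NF1 z1 c"
      proof -
        obtain a' b' k where h: "z1 = a' @ X k # c # b'" "k \<notin> NF1" using fp_elim[OF fp] by blast
        have kj: "k = j"
        proof (rule ccontr)
          assume "k \<noteq> j"
          moreover have "a @ X j # b = a' @ X k # c # b'" using z1 h by simp
          ultimately obtain c' d' where "a @ b = c' @ X k # c # d'"
            using adj_del c(2) by (metis is_A.simps(2) letter.inject(2))
          hence "freshpred NF z c" using fp_intro h(2) N1 z by blast
          thus False using c(4) by simp
        qed
        have "c \<in> Dset z1 u" using cz1 c by (simp add: inD)
        hence "k \<in> Kset NF1 z1 u" using inK_D[OF h(2) h(1)] by blast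
        thus ?thesis using kj sl by blast
      qed
      thus ?thesis using cz1 by blast
    qed
    have cD1: "c \<in> Dset z1 u" using main c by (simp add: inD)
    show "cl NF1 z1 u \<le> slab NF z z1"
    proof (cases "freshpred NF1 z1 c")
      case False
      hence "c \<in> Fset NF1 z1 u" using cD1 by (simp add: inF)
      hence "cl NF1 z1 u \<le> c" by (rule cl_le_F)
      thus ?thesis using lt c_def by simp
    next
      case True
      then obtain k where "k \<in> Kset NF1 z1 u" "slab NF z z1 = X k" using main by blast
      thus ?thesis using cl_le_K by metis
    qed
  next
    case True
    have Kne: "Kset NF z u \<noteq> {}" using K_ne[OF s ne True] .
    define k0 where "k0 = Min (Kset NF z u)"
    have cK: "cl NF z u = X k0" "k0 \<in> Kset NF z u" "\<forall>k\<in>Kset NF z u. k0 \<le> k"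
      using cl_K[OF True Kne] k0_def by simp_all
    have slX: "\<exists>j. slab NF z z1 = X j \<and> j \<noteq> k0 \<and>
        ((\<exists>a b m. z = a @ X j # A m # b \<and> z1 = a @ X j # b \<and> NF1 = NF \<union> {j}) \<or>
         (\<exists>a b. z = a @ b \<and> z1 = a @ X j # b \<and> X j \<notin> set z \<and> NF1 = NF))"
      using LC
    proof (elim disjE exE conjE)
      fix a b m assume "A m \<in> Dset z u" "\<not> freshpred NF z (A m)"
      hence "A m \<in> Fset NF z u" by (simp add: inF)
      thus ?thesis using True by simp
    next
      fix a b k m assume h: "z = a @ X k # A m # b" "z1 = a @ X k # b" "slab NF z z1 = X k" "NF1 = NF \<union> {k}"
      hence "k \<noteq> k0" using l cK(1) by auto
      thus ?thesis using h by blast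
    next
      fix a b k assume h: "z = a @ b" "z1 = a @ X k # b" "X k \<notin> set z" "slab NF z z1 = X k" "NF1 = NF"
      hence "k \<noteq> k0" using l cK(1) by auto
      thus ?thesis using h by blast
    qed
    then obtain j where sj: "slab NF z z1 = X j" and jk: "j \<noteq> k0"
      and SH: "(\<exists>a b m. z = a @ X j # A m # b \<and> z1 = a @ X j # b \<and> NF1 = NF \<union> {j}) \<or>
         (\<exists>a b. z = a @ b \<and> z1 = a @ X j # b \<and> X j \<notin> set z \<and> NF1 = NF)" by blast
    have zz1: "\<forall>y\<in>set z. is_X y \<longrightarrow> y \<in> set z1" using SH by auto
    have z1z: "\<forall>y\<in>set z1. y \<noteq> X j \<longrightarrow> y \<in> set z" using SH by auto
    have goal: "k0 \<in> Kset NF1 z1 u \<or> j \<in> Kset NF1 z1 u"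
    proof -
      from K_cases[OF cK(2)] show ?thesis
      proof
        assume h: "X k0 \<in> set u \<and> X k0 \<notin> set z"
        hence "X k0 \<notin> set z1" using z1z jk by auto
        thus ?thesis using h inK_I by blast
      next
        assume "k0 \<notin> NF \<and> (\<exists>a d b. z = a @ X k0 # d # b \<and> d \<in> Dset z u)"
        then obtain a0 d b0 where h: "k0 \<notin> NF" "z = a0 @ X k0 # d # b0" "d \<in> Dset z u" by blast
        have dA: "is_A d" "d \<notin> set u" using h(3) by (simp_all add: inD)
        from SH show ?thesis
        proof (elim disjE exE conjE)
          fix a b m assume z: "z = a @ X j # A m # b" and z1: "z1 = a @ X j # b" and N1: "NF1 = NF \<union> {j}"
          have dm: "A m \<noteq> d"
          proof
            assume "A m = d"
            hence "X j = X k0" using pred_unique[OF dz z] h(2) by metis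
            thus False using jk by simp
          qed
          have "(a @ [X j]) @ A m # b = a0 @ X k0 # d # b0" using z h(2) by simp
          then obtain c' e' where ce: "(a @ [X j]) @ b = c' @ X k0 # d # e'" using adj_del dm by (metis letter.distinct(1))
          have "d \<in> set z1" using z1 ce by auto
          hence "d \<in> Dset z1 u" using dA by (simp add: inD)
          moreover have "k0 \<notin> NF1" using N1 h(1) jk by simp
          ultimately have "k0 \<in> Kset NF1 z1 u" using inK_D ce z1 by simp
          thus ?thesis by blast
        next
          fix a b assume z: "z = a @ b" and z1: "z1 = a @ X j # b" and xz: "X j \<notin> set z" and N1: "NF1 = NF"
          have jN: "j \<notin> NF" using NFs xz by auto
          have "a @ b = a0 @ X k0 # d # b0" using z h(2) by simp
          from adj_del_rev[OF this, of "X j"] show ?thesis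
          proof
            assume "\<exists>c' d'. a @ X j # b = c' @ X k0 # d # d'"
            then obtain c' d' where ce: "z1 = c' @ X k0 # d # d'" using z1 by auto
            hence "d \<in> Dset z1 u" using dA by (simp add: inD)
            hence "k0 \<in> Kset NF1 z1 u" using inK_D[of k0 NF1 z1 c' d d' u] ce h(1) N1 by simp
            thus ?thesis by blast
          next
            assume "a = a0 @ [X k0] \<and> b = d # b0"
            hence ce: "z1 = (a0 @ [X k0]) @ X j # d # b0" using z1 by simp
            hence "d \<in> Dset z1 u" using dA by (simp add: inD)
            hence "j \<in> Kset NF1 z1 u" using inK_D[of j NF1 z1 "a0 @ [X k0]" d b0 u] ce jN N1 by simp
            thus ?thesis by blast
          qed
        qed
      qed
    qed
    thus "cl NF1 z1 u \<le> slab NF z z1"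
    proof
      assume "k0 \<in> Kset NF1 z1 u"
      hence "cl NF1 z1 u \<le> X k0" by (rule cl_le_K)
      thus ?thesis using lt cK(1) by simp
    next
      assume "j \<in> Kset NF1 z1 u"
      hence "cl NF1 z1 u \<le> X j" by (rule cl_le_K)
      thus ?thesis using sj by simp
    qed
  qed
qed


definition chn :: "nat \<Rightarrow> nat \<Rightarrow> letter list list \<Rightarrow> bool" where
  "chn M N q \<longleftrightarrow> q \<noteq> [] \<and> set q \<subseteq> shuffle_words M N \<and> (\<forall>i. Suc i < length q \<longrightarrow> shuffle_step (q ! i) (q ! Suc i))"

definition incr :: "nat set \<Rightarrow> letter list list \<Rightarrow> bool" where
  "incr NF q \<longleftrightarrow> (\<forall>i. i + 2 < length q \<longrightarrow>
     slab (nfq NF q i) (q ! i) (q ! Suc i) < slab (nfq NF q (Suc i)) (q ! Suc i) (q ! Suc (Suc i)))"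

lemma chn_single: "chn M N [a] \<longleftrightarrow> a \<in> shuffle_words M N"
  by (simp add: chn_def)

lemma chn_Cons2: "chn M N (a # b # r) \<longleftrightarrow> a \<in> shuffle_words M N \<and> shuffle_step a b \<and> chn M N (b # r)"
proof
  assume h: "chn M N (a # b # r)"
  have st: "\<forall>i. Suc i < length (a # b # r) \<longrightarrow> shuffle_step ((a # b # r) ! i) ((a # b # r) ! Suc i)"
    using h by (simp add: chn_def)
  have "shuffle_step a b" using st[rule_format, of 0] by simp
  moreover have "\<forall>i. Suc i < length (b # r) \<longrightarrow> shuffle_step ((b # r) ! i) ((b # r) ! Suc i)"
  proof (intro allI impI)
    fix i assume "Suc i < length (b # r)"
    thus "shuffle_step ((b # r) ! i) ((b # r) ! Suc i)" using st[rule_format, of "Suc i"] by simp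
  qed
  ultimately show "a \<in> shuffle_words M N \<and> shuffle_step a b \<and> chn M N (b # r)"
    using h by (simp add: chn_def)
next
  assume h: "a \<in> shuffle_words M N \<and> shuffle_step a b \<and> chn M N (b # r)"
  have st: "\<forall>i. Suc i < length (b # r) \<longrightarrow> shuffle_step ((b # r) ! i) ((b # r) ! Suc i)"
    using h by (simp add: chn_def)
  have "\<forall>i. Suc i < length (a # b # r) \<longrightarrow> shuffle_step ((a # b # r) ! i) ((a # b # r) ! Suc i)"
  proof (intro allI impI)
    fix i assume i: "Suc i < length (a # b # r)"
    show "shuffle_step ((a # b # r) ! i) ((a # b # r) ! Suc i)"
    proof (cases i)
      case 0 thus ?thesis using h by simp
    next
      case (Suc j) thus ?thesis using st[rule_format, of j] i by simp
    qed
  qed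
  thus "chn M N (a # b # r)" using h by (simp add: chn_def)
qed

lemma chn_tl: "chn M N (a # r) \<Longrightarrow> r \<noteq> [] \<Longrightarrow> chn M N r"
  by (cases r) (simp_all add: chn_Cons2)

lemma chn_hd: "chn M N (a # r) \<Longrightarrow> a \<in> shuffle_words M N"
  by (simp add: chn_def)

lemma chn_le: "chn M N (z # r) \<Longrightarrow> shuffle_le M N z (last (z # r))"
proof (induction r arbitrary: z)
  case Nil thus ?case by (simp add: le_refl)
next
  case (Cons b r)
  have h: "z \<in> shuffle_words M N" "shuffle_step z b" "chn M N (b # r)" using Cons.prems by (simp_all add: chn_Cons2)
  have "shuffle_le M N z b" using le_step[OF h(1) chn_hd[OF h(3)] h(2)] .
  moreover have "shuffle_le M N b (last (b # r))" using Cons.IH[OF h(3)] .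
  ultimately show ?case using le_trans[of M N z b] by simp
qed

lemma chn_rk: "chn M N (z # r) \<Longrightarrow> rk (last (z # r)) = rk z + int (length r)"
proof (induction r arbitrary: z)
  case Nil thus ?case by simp
next
  case (Cons b r)
  have h: "shuffle_step z b" "chn M N (b # r)" using Cons.prems by (simp_all add: chn_Cons2)
  have "rk (last (b # r)) = rk b + int (length r)" using Cons.IH[OF h(2)] .
  thus ?case using step_rk[OF h(1)] by simp
qed

lemma chn_append: "chn M N xs \<Longrightarrow> chn M N ys \<Longrightarrow> last xs = hd ys \<Longrightarrow> chn M N (xs @ tl ys)"
proof (induction xs)
  case Nil thus ?case by (simp add: chn_def)
next
  case (Cons a xs)
  show ?case
  proof (cases xs)
    case Nil
    have "ys \<noteq> []" using Cons.prems(2) by (simp add: chn_def)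
    hence "ys = hd ys # tl ys" by simp
    hence "ys = a # tl ys" using Cons.prems(3) Nil by simp
    hence "(a # xs) @ tl ys = ys" using Nil by simp
    thus ?thesis using Cons.prems(2) by simp
  next
    case (Cons b r)
    have c1: "chn M N (a # b # r)" using Cons.prems(1) \<open>xs = b # r\<close> by simp
    have h: "a \<in> shuffle_words M N" "shuffle_step a b" "chn M N (b # r)" using c1 by (simp_all add: chn_Cons2)
    have l: "last xs = hd ys" using Cons.prems(3) \<open>xs = b # r\<close> by simp
    have "chn M N (xs @ tl ys)" using Cons.IH h(3) Cons.prems(2) l \<open>xs = b # r\<close> by simp
    hence "chn M N (b # (r @ tl ys))" using \<open>xs = b # r\<close> by simp
    hence "chn M N (a # b # (r @ tl ys))" using h chn_Cons2 by blast
    thus ?thesis using \<open>xs = b # r\<close> by simp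
  qed
qed

lemma rtrancl_chn: "(a, b) \<in> (SR M N)\<^sup>* \<Longrightarrow> b \<in> shuffle_words M N \<Longrightarrow> \<exists>s. chn M N s \<and> hd s = a \<and> last s = b"
proof (induction rule: converse_rtrancl_induct)
  case base
  have "chn M N [b]" using base by (simp add: chn_single)
  thus ?case by (intro exI[of _ "[b]"]) simp
next
  case (step y z)
  then obtain s where s: "chn M N s" "hd s = z" "last s = b" by blast
  have yz: "y \<in> shuffle_words M N" "shuffle_step y z" using step.hyps(1) by (simp_all add: mem_SR)
  have sne: "s \<noteq> []" using s(1) by (simp add: chn_def)
  hence "s = z # tl s" using s(2) by (metis list.collapse)
  hence "chn M N (y # z # tl s)" using yz s(1) chn_Cons2[of M N y z "tl s"] by simp
  hence "chn M N (y # s)" using \<open>s = z # tl s\<close> by simp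
  moreover have "last (y # s) = b" using s(3) sne by simp
  ultimately show ?case by (intro exI[of _ "y # s"]) simp
qed

lemma nfq_0: "nfq NF q 0 = NF"
  by (simp add: nfq_def)

lemma nfq_Suc: "nfq NF q (Suc i) = nfn (nfq NF q i) (q ! i) (q ! Suc i)"
  by (auto simp: nfq_def nfn_def less_Suc_eq)

lemma nfq_Cons: "nfq NF (a # b # r) (Suc i) = nfq (nfn NF a b) (b # r) i"
proof (induction i)
  case 0 thus ?case by (simp add: nfq_Suc nfq_0)
next
  case (Suc i)
  have "nfq NF (a # b # r) (Suc (Suc i)) = nfn (nfq NF (a # b # r) (Suc i)) ((a # b # r) ! Suc i) ((a # b # r) ! Suc (Suc i))"
    by (rule nfq_Suc)
  also have "\<dots> = nfn (nfq (nfn NF a b) (b # r) i) ((b # r) ! i) ((b # r) ! Suc i)" using Suc by simp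
  also have "\<dots> = nfq (nfn NF a b) (b # r) (Suc i)" by (simp add: nfq_Suc)
  finally show ?case .
qed

lemma incr_Cons: "incr NF (a # b # r) \<longleftrightarrow>
   (r \<noteq> [] \<longrightarrow> slab NF a b < slab (nfn NF a b) b (hd r)) \<and> incr (nfn NF a b) (b # r)"
proof -
  let ?q = "a # b # r"
  let ?P = "\<lambda>i. i + 2 < length ?q \<longrightarrow>
     slab (nfq NF ?q i) (?q ! i) (?q ! Suc i) < slab (nfq NF ?q (Suc i)) (?q ! Suc i) (?q ! Suc (Suc i))"
  have e0: "?P 0 \<longleftrightarrow> (r \<noteq> [] \<longrightarrow> slab NF a b < slab (nfn NF a b) b (hd r))"
    using nfq_Cons[of NF a b r 0] by (cases r) (simp_all add: nfq_0)
  have eS: "?P (Suc i) \<longleftrightarrow> (i + 2 < length (b # r) \<longrightarrow>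
     slab (nfq (nfn NF a b) (b # r) i) ((b # r) ! i) ((b # r) ! Suc i) <
     slab (nfq (nfn NF a b) (b # r) (Suc i)) ((b # r) ! Suc i) ((b # r) ! Suc (Suc i)))" for i
    by (simp add: nfq_Cons)
  have "(\<forall>i. ?P i) \<longleftrightarrow> ?P 0 \<and> (\<forall>i. ?P (Suc i))"
    by (metis nat.exhaust)
  thus ?thesis unfolding incr_def e0 eS by simp
qed

lemma incr_short: "length q \<le> 2 \<Longrightarrow> incr NF q"
  by (simp add: incr_def)

lemma nfn_inv: "shuffle_step z z1 \<Longrightarrow> NF \<subseteq> {k. X k \<in> set z} \<Longrightarrow> nfn NF z z1 \<subseteq> {k. X k \<in> set z1}"
proof -
  assume st: "shuffle_step z z1" and NF: "NF \<subseteq> {k. X k \<in> set z}"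
  have "X k \<in> set z1" if "X k \<in> set z" for k
    using st that unfolding shuffle_step_def by auto
  moreover have "X k \<in> set z1" if "del_after_X k z z1" for k
    using that unfolding del_after_X_def by auto
  ultimately show ?thesis using NF unfolding nfn_def by blast
qed


lemma first_step:
  "chn M N (z # z1 # r) \<Longrightarrow> incr NF (z # z1 # r) \<Longrightarrow> NF \<subseteq> {k. X k \<in> set z} \<Longrightarrow>
   slab NF z z1 = cl NF z (last (z1 # r))"
proof (induction r arbitrary: z z1 NF)
  case Nil
  have h: "z \<in> shuffle_words M N" "shuffle_step z z1" "chn M N [z1]" using Nil.prems(1) by (simp_all add: chn_Cons2)
  have z1W: "z1 \<in> shuffle_words M N" using h(3) by (simp add: chn_single)
  have s: "sle M N z z1" using le_sle[OF le_step[OF h(1) z1W h(2)] h(1)] .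
  have ne: "z \<noteq> z1" using step_rk[OF h(2)] by auto
  obtain z1' where v: "valid M N z z1 z1'" "slab NF z z1' = cl NF z z1" using E1[OF s ne] by blast
  have le: "shuffle_le M N z1' z1" using sle_le[OF valid_sle[OF v(1)]] .
  have "rk z1' = rk z + 1" using v(1) step_rk by (simp add: valid_def)
  hence "rk z1' = rk z1" using step_rk[OF h(2)] by simp
  hence "z1' = z1" using le_rk_eq[OF le] by simp
  thus ?case using v(2) by simp
next
  case (Cons z2 r)
  let ?u = "last (z2 # r)"
  have h: "z \<in> shuffle_words M N" "shuffle_step z z1" "chn M N (z1 # z2 # r)"
    using Cons.prems(1) by (simp_all add: chn_Cons2)
  have inc: "slab NF z z1 < slab (nfn NF z z1) z1 z2" "incr (nfn NF z z1) (z1 # z2 # r)"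
    using Cons.prems(2) incr_Cons[of NF z z1 "z2 # r"] by simp_all
  have NF1: "nfn NF z z1 \<subseteq> {k. X k \<in> set z1}" using nfn_inv[OF h(2) Cons.prems(3)] .
  have IH: "slab (nfn NF z z1) z1 z2 = cl (nfn NF z z1) z1 ?u" using Cons.IH[OF h(3) inc(2) NF1] by simp
  have z1W: "z1 \<in> shuffle_words M N" using chn_hd[OF h(3)] .
  have le1: "shuffle_le M N z1 ?u" using chn_le[OF h(3)] by simp
  have s1: "sle M N z1 ?u" using le_sle[OF le1 z1W] .
  have le0: "shuffle_le M N z ?u" using le_trans[OF le_step[OF h(1) z1W h(2)] le1] .
  have s: "sle M N z ?u" using le_sle[OF le0 h(1)] .
  have rku: "rk ?u = rk z1 + int (length (z2 # r))" using chn_rk[OF h(3)] by simp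
  have rk1: "rk z1 = rk z + 1" using step_rk[OF h(2)] .
  have ne1: "z1 \<noteq> ?u" using rku by auto
  have ne: "z \<noteq> ?u" using rku rk1 by auto
  have v: "valid M N z ?u z1" using valid_intro[OF h(2) s1] .
  show ?case
  proof (rule ccontr)
    assume "slab NF z z1 \<noteq> cl NF z (last (z1 # z2 # r))"
    hence "slab NF z z1 \<noteq> cl NF z ?u" by simp
    from M2[OF s ne Cons.prems(3) v this ne1]
    have "cl (nfn NF z z1) z1 ?u \<le> slab NF z z1" .
    thus False using inc(1) IH by simp
  qed
qed

lemma uniq: "chn M N q \<Longrightarrow> chn M N q' \<Longrightarrow> hd q' = hd q \<Longrightarrow> last q' = last q \<Longrightarrow> incr NF q \<Longrightarrow> incr NF q' \<Longrightarrow>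
   NF \<subseteq> {k. X k \<in> set (hd q)} \<Longrightarrow> q = q'"
proof (induction q arbitrary: q' NF)
  case Nil thus ?case by (simp add: chn_def)
next
  case (Cons z qs)
  obtain z' qs' where q': "q' = z' # qs'" using Cons.prems(2) by (cases q') (auto simp: chn_def)
  have zz: "z' = z" using Cons.prems(3) q' by simp
  have c': "chn M N (z # qs')" using Cons.prems(2) q' zz by simp
  have rk': "rk (last (z # qs')) = rk z + int (length qs')" using chn_rk[OF c'] .
  have lq: "last (z # qs') = last (z # qs)" using Cons.prems(4) q' zz by simp
  show ?case
  proof (cases qs)
    case Nil
    hence "length qs' = 0" using rk' lq by simp
    thus ?thesis using Nil q' zz by simp
  next
    case (Cons z1 r)
    have c: "chn M N (z # z1 # r)" using Cons.prems(1) \<open>qs = z1 # r\<close> by simp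
    have rk: "rk (last (z # z1 # r)) = rk z + int (length (z1 # r))" using chn_rk[OF c] .
    have "qs' \<noteq> []" using rk rk' lq \<open>qs = z1 # r\<close> by auto
    then obtain z1' r' where qs': "qs' = z1' # r'" by (cases qs') auto
    have c2: "chn M N (z # z1' # r')" using c' qs' by simp
    let ?u = "last (z1 # r)"
    have lu: "last (z1' # r') = ?u" using lq qs' \<open>qs = z1 # r\<close> by simp
    have NF: "NF \<subseteq> {k. X k \<in> set z}" using Cons.prems(7) by simp
    have inc1: "incr NF (z # z1 # r)" using Cons.prems(5) \<open>qs = z1 # r\<close> by simp
    have inc2: "incr NF (z # z1' # r')" using Cons.prems(6) q' zz qs' by simp
    have f1: "slab NF z z1 = cl NF z ?u" using first_step[OF c inc1 NF] .
    have f2: "slab NF z z1' = cl NF z ?u" using first_step[OF c2 inc2 NF] lu by simp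
    have h1: "z \<in> shuffle_words M N" "shuffle_step z z1" "chn M N (z1 # r)" using c by (simp_all add: chn_Cons2)
    have h2: "shuffle_step z z1'" "chn M N (z1' # r')" using c2 by (simp_all add: chn_Cons2)
    have s1: "sle M N z1 ?u" using le_sle[OF chn_le[OF h1(3)] chn_hd[OF h1(3)]] .
    have s2: "sle M N z1' ?u" using le_sle[OF chn_le[OF h2(2)] chn_hd[OF h2(2)]] lu by simp
    have le0: "shuffle_le M N z ?u" using le_trans[OF le_step[OF h1(1) chn_hd[OF h1(3)] h1(2)] chn_le[OF h1(3)]] .
    have s: "sle M N z ?u" using le_sle[OF le0 h1(1)] .
    have ne: "z \<noteq> ?u" using rk by auto
    have "z1 = z1'" using M1b[OF s ne valid_intro[OF h1(2) s1] valid_intro[OF h2(1) s2] f1 f2] .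
    have NF1: "nfn NF z z1 \<subseteq> {k. X k \<in> set z1}" using nfn_inv[OF h1(2) NF] .
    have i1: "incr (nfn NF z z1) (z1 # r)" using inc1 incr_Cons by blast
    have i2: "incr (nfn NF z z1) (z1 # r')" using inc2 incr_Cons \<open>z1 = z1'\<close> by blast
    have "z1 # r = z1 # r'"
      using Cons.IH[OF _ _ _ _ _ i2] h1(3) h2(2) \<open>z1 = z1'\<close> lu i1 NF1 \<open>qs = z1 # r\<close> by simp
    thus ?thesis using q' zz qs' \<open>qs = z1 # r\<close> \<open>z1 = z1'\<close> by simp
  qed
qed

lemma exist: "sle M N z u \<Longrightarrow> NF \<subseteq> {k. X k \<in> set z} \<Longrightarrow>
  \<exists>q. chn M N q \<and> hd q = z \<and> last q = u \<and> incr NF q \<and> (\<forall>z1 r. q = z # z1 # r \<longrightarrow> slab NF z z1 = cl NF z u)"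
proof (induction "nat (rk u - rk z)" arbitrary: z NF rule: less_induct)
  case less
  have zW: "z \<in> shuffle_words M N" using less.prems(1) by (simp add: sle_def)
  show ?case
  proof (cases "z = u")
    case True
    have "chn M N [z]" using zW by (simp add: chn_single)
    moreover have "incr NF [z]" by (simp add: incr_short)
    ultimately show ?thesis using True by (intro exI[of _ "[z]"]) simp
  next
    case False
    obtain z1 where v: "valid M N z u z1" and l: "slab NF z z1 = cl NF z u" using E1[OF less.prems(1) False] by blast
    have s1: "sle M N z1 u" using valid_sle[OF v] .
    have st: "shuffle_step z z1" using v by (simp add: valid_def)
    have NF1: "nfn NF z z1 \<subseteq> {k. X k \<in> set z1}" using nfn_inv[OF st less.prems(2)] .
    have rk1: "rk z1 = rk z + 1" using step_rk[OF st] .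
    have "rk z1 \<le> rk u" using le_rk[OF sle_le[OF s1]] .
    hence "nat (rk u - rk z1) < nat (rk u - rk z)" using rk1 by simp
    then obtain q1 where q1: "chn M N q1" "hd q1 = z1" "last q1 = u" "incr (nfn NF z z1) q1"
      "\<forall>z2 r. q1 = z1 # z2 # r \<longrightarrow> slab (nfn NF z z1) z1 z2 = cl (nfn NF z z1) z1 u"
      using less.hyps[OF _ s1 NF1] by blast
    have "q1 \<noteq> []" using q1(1) by (simp add: chn_def)
    then obtain r where r: "q1 = z1 # r" using q1(2) by (metis list.collapse)
    have c: "chn M N (z # z1 # r)" using zW st q1(1) r chn_Cons2 by blast
    have inc: "incr NF (z # z1 # r)"
    proof -
      have "slab NF z z1 < slab (nfn NF z z1) z1 (hd r)" if rne: "r \<noteq> []"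
      proof -
        obtain z2 r' where r': "r = z2 # r'" using rne by (cases r) auto
        have "rk u = rk z1 + int (length r)" using chn_rk[of M N z1 r] q1(1) q1(3) r by simp
        hence ne1: "z1 \<noteq> u" using rne by auto
        have "cl NF z u < cl (nfn NF z z1) z1 u" using E2[OF less.prems(1) False less.prems(2) v l ne1] .
        moreover have "slab (nfn NF z z1) z1 z2 = cl (nfn NF z z1) z1 u" using q1(5) r r' by simp
        ultimately show ?thesis using l r' by simp
      qed
      thus ?thesis using incr_Cons q1(4) r by blast
    qed
    show ?thesis
      using c inc l q1(3) r by (intro exI[of _ "z # z1 # r"]) simp
  qed
qed


lemma cover_chain_iff: "cover_chain (shuffle_words M N) (shuffle_le M N) q \<longleftrightarrow> chn M N q"
proof
  assume h: "cover_chain (shuffle_words M N) (shuffle_le M N) q"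
  have ne: "q \<noteq> []" and hd: "hd q \<in> shuffle_words M N"
    and cv: "\<And>i. Suc i < length q \<Longrightarrow> q ! i \<in> shuffle_words M N \<and> q ! Suc i \<in> shuffle_words M N \<and> shuffle_step (q ! i) (q ! Suc i)"
    using h by (simp_all add: cover_chain_def covers_iff)
  have "set q \<subseteq> shuffle_words M N"
  proof
    fix x assume "x \<in> set q"
    then obtain i where i: "i < length q" "x = q ! i" by (metis in_set_conv_nth)
    show "x \<in> shuffle_words M N"
    proof (cases i)
      case 0 thus ?thesis using hd ne i by (simp add: hd_conv_nth)
    next
      case (Suc j) thus ?thesis using cv[of j] i by simp
    qed
  qed
  thus "chn M N q" using ne cv by (simp add: chn_def)
next
  assume h: "chn M N q"
  hence ne: "q \<noteq> []" and st: "set q \<subseteq> shuffle_words M N"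
    and s: "\<And>i. Suc i < length q \<Longrightarrow> shuffle_step (q ! i) (q ! Suc i)" by (simp_all add: chn_def)
  have "hd q \<in> shuffle_words M N" using ne st by auto
  moreover have "covers (shuffle_words M N) (shuffle_le M N) (q ! i) (q ! Suc i)" if "Suc i < length q" for i
    using that st s[OF that] nth_mem[of i q] nth_mem[of "Suc i" q] by (simp add: covers_iff subset_iff)
  ultimately show "cover_chain (shuffle_words M N) (shuffle_le M N) q" using ne by (simp add: cover_chain_def)
qed

lemma max_chains_iff: "c \<in> max_chains (shuffle_words M N) (shuffle_le M N) (shuffle_bot M) (shuffle_top N) \<longleftrightarrow>
   chn M N c \<and> hd c = shuffle_bot M \<and> last c = shuffle_top N"
  by (simp add: max_chains_def cover_chain_iff)

lemma rk_top: "rk (shuffle_top N) = int N"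
proof -
  have "filter is_A (map X [1..<Suc N]) = []" by (induction N) auto
  moreover have "filter is_X (map X [1..<Suc N]) = map X [1..<Suc N]" by (induction N) auto
  ultimately show ?thesis by (simp add: rk_def shuffle_top_def)
qed

lemma rk_bot: "rk (shuffle_bot M) = - int M"
proof -
  have "filter is_X (map A [1..<Suc M]) = []" by (induction M) auto
  moreover have "filter is_A (map A [1..<Suc M]) = map A [1..<Suc M]" by (induction M) auto
  ultimately show ?thesis by (simp add: rk_def shuffle_bot_def)
qed

lemma max_len: "chn M N c \<Longrightarrow> hd c = shuffle_bot M \<Longrightarrow> last c = shuffle_top N \<Longrightarrow> length c = Suc (M + N)"
proof -
  assume h: "chn M N c" "hd c = shuffle_bot M" "last c = shuffle_top N"
  have ne: "c \<noteq> []" using h(1) by (simp add: chn_def)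
  hence c: "c = hd c # tl c" by simp
  have "rk (last (hd c # tl c)) = rk (hd c) + int (length (tl c))" using chn_rk[of M N "hd c" "tl c"] h(1) c by simp
  hence "int N = - int M + int (length (tl c))" using h rk_top rk_bot c by metis
  hence "length (tl c) = M + N" by simp
  thus ?thesis using ne by (cases c) simp_all
qed

lemma nfq_cong: "(\<And>j. j \<le> i \<Longrightarrow> c ! j = c' ! j) \<Longrightarrow> nfq NF c i = nfq NF c' i"
proof -
  assume h: "\<And>j. j \<le> i \<Longrightarrow> c ! j = c' ! j"
  have "del_after_X k (c ! j) (c ! Suc j) = del_after_X k (c' ! j) (c' ! Suc j)" if "j < i" for j k
    using h[of j] h[of "Suc j"] that by simp
  thus ?thesis unfolding nfq_def by blast
qed

lemma nfq_inv: "chn M N p \<Longrightarrow> i < length p \<Longrightarrow> nfq {} p i \<subseteq> {k. X k \<in> set (p ! i)}"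
proof (induction i)
  case 0 thus ?case by (simp add: nfq_0)
next
  case (Suc i)
  have st: "shuffle_step (p ! i) (p ! Suc i)" using Suc.prems by (simp add: chn_def)
  show ?case unfolding nfq_Suc using nfn_inv[OF st Suc.IH] Suc.prems by simp
qed

lemma last_app: "xs \<noteq> [] \<Longrightarrow> ys \<noteq> [] \<Longrightarrow> last xs = hd ys \<Longrightarrow> last (xs @ tl ys) = last ys"
proof -
  assume h: "xs \<noteq> []" "ys \<noteq> []" "last xs = hd ys"
  show ?thesis
  proof (cases "tl ys = []")
    case True
    hence "ys = [hd ys]" using h(2) by (metis list.collapse)
    thus ?thesis using True h by (metis append_Nil2 last_ConsL)
  next
    case False
    thus ?thesis using h(2) by (simp add: last_tl)
  qed
qed

lemma extend:
  assumes p: "chn M N p" "hd p = shuffle_bot M" and q: "chn M N q" "hd q = last p"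
  shows "\<exists>c. chn M N c \<and> hd c = shuffle_bot M \<and> last c = shuffle_top N \<and>
             take (length p + length q - 1) c = p @ tl q"
proof -
  have pne: "p \<noteq> []" and qne: "q \<noteq> []" using p q by (simp_all add: chn_def)
  have uW: "last q \<in> shuffle_words M N" using q qne by (auto simp: chn_def)
  have "shuffle_le M N (last q) (shuffle_top N)" using sle_le[OF sle_top[OF uW]] .
  then obtain s where s: "chn M N s" "hd s = last q" "last s = shuffle_top N"
    using rtrancl_chn[of "last q" "shuffle_top N" M N] top_W by (auto simp: le_def')
  have sne: "s \<noteq> []" using s by (simp add: chn_def)
  have c1: "chn M N (p @ tl q)" using chn_append[OF p(1) q(1) q(2)[symmetric]] .
  have l1: "last (p @ tl q) = last q" using last_app[OF pne qne q(2)[symmetric]] .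
  have c2: "chn M N ((p @ tl q) @ tl s)" using chn_append[OF c1 s(1)] l1 s(2) by simp
  have ne2: "p @ tl q \<noteq> []" using pne by simp
  have e2: "last (p @ tl q) = hd s" using l1 s(2) by simp
  have "last ((p @ tl q) @ tl s) = last s" by (rule last_app[OF ne2 sne e2])
  hence l2: "last ((p @ tl q) @ tl s) = shuffle_top N" using s(3) by simp
  have h2: "hd ((p @ tl q) @ tl s) = shuffle_bot M" using pne p(2) by simp
  have len: "length (p @ tl q) = length p + length q - 1" using qne by (cases q) simp_all
  have "take (length p + length q - 1) ((p @ tl q) @ tl s) = p @ tl q"
    unfolding len[symmetric] by simp
  thus ?thesis using c2 l2 h2 by blast
qed

lemma link:
  assumes p: "chn M N p" and q: "chn M N q" "hd q = last p" and c: "chn M N c"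
    and tk: "take (length p + length q - 1) c = p @ tl q"
  shows "(\<forall>j. length p - 1 < j \<and> j < length p + length q - 2 \<longrightarrow> shuffle_label c j < shuffle_label c (Suc j))
         \<longleftrightarrow> incr (nfq {} p (length p - 1)) q"
proof -
  have pne: "p \<noteq> []" and qne: "q \<noteq> []" using p q by (simp_all add: chn_def)
  define r where "r = length p - 1"
  define n where "n = length q"
  have lp: "length p = Suc r" using pne r_def by simp
  have n1: "n \<ge> 1" using qne n_def by (cases q) auto
  have lenpq: "length (p @ tl q) = r + n" using lp n_def qne by simp
  have tk': "take (r + n) c = p @ tl q" using tk lp n_def by simp
  have lc: "length c \<ge> r + n"
  proof -
    have "length (take (r + n) c) = r + n" using tk' lenpq by simp
    thus ?thesis by simp
  qed
  have cpq: "c ! k = (p @ tl q) ! k" if "k < r + n" for k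
  proof -
    have "c ! k = take (r + n) c ! k" using that by simp
    thus ?thesis using tk' by simp
  qed
  have cp: "c ! j = p ! j" if "j \<le> r" for j
  proof -
    have "j < r + n" using that n1 by simp
    hence "c ! j = (p @ tl q) ! j" using cpq by blast
    thus ?thesis using that lp by (simp add: nth_append)
  qed
  have cq: "c ! (r + i) = q ! i" if "i < n" for i
  proof (cases i)
    case 0
    have "c ! r = p ! r" using cp by simp
    also have "\<dots> = last p" using lp by (simp add: last_conv_nth pne)
    also have "\<dots> = q ! 0" using q(2) qne by (simp add: hd_conv_nth)
    finally show ?thesis using 0 by simp
  next
    case (Suc i')
    have "c ! (r + i) = (p @ tl q) ! (r + i)" using cpq that by simp
    also have "\<dots> = tl q ! i'" using lp Suc by (simp add: nth_append)
    also have "\<dots> = q ! i" using Suc qne that n_def by (simp add: nth_tl)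
    finally show ?thesis .
  qed
  define NF where "NF = nfq {} p r"
  have NFc: "nfq {} c r = NF" unfolding NF_def using nfq_cong[of r c p "{}"] cp by blast
  have nfc: "nfq {} c (r + i) = nfq NF q i" if "i < n" for i
    using that
  proof (induction i)
    case 0 thus ?case using NFc by (simp add: nfq_0)
  next
    case (Suc i)
    have "nfq {} c (r + Suc i) = nfn (nfq {} c (r + i)) (c ! (r + i)) (c ! Suc (r + i))"
      using nfq_Suc[of "{}" c "r + i"] by simp
    also have "\<dots> = nfn (nfq NF q i) (q ! i) (q ! Suc i)"
      using Suc.IH Suc.prems cq[of i] cq[of "Suc i"] by simp
    also have "\<dots> = nfq NF q (Suc i)" by (simp add: nfq_Suc)
    finally show ?case .
  qed
  have lab: "shuffle_label c (Suc (r + i)) = slab (nfq NF q i) (q ! i) (q ! Suc i)" if "Suc i < n" for i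
  proof -
    have "shuffle_label c (Suc (r + i)) = slab (nfq {} c (r + i)) (c ! (r + i)) (c ! Suc (r + i))"
      by (rule shuffle_label_slab)
    also have "\<dots> = slab (nfq NF q i) (q ! i) (q ! Suc i)"
      using nfc[of i] cq[of i] cq[of "Suc i"] that by simp
    finally show ?thesis .
  qed
  have bounds: "length p - 1 = r" "length p + length q - 2 = r + n - 1" using lp n_def by simp_all
  show ?thesis unfolding bounds NF_def[symmetric]
  proof
    assume L: "\<forall>j. r < j \<and> j < r + n - 1 \<longrightarrow> shuffle_label c j < shuffle_label c (Suc j)"
    show "incr NF q" unfolding incr_def
    proof (intro allI impI)
      fix i assume i: "i + 2 < length q"
      have "shuffle_label c (Suc (r + i)) < shuffle_label c (Suc (Suc (r + i)))"
        using L[rule_format, of "Suc (r + i)"] i n_def by simp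
      moreover have "shuffle_label c (Suc (Suc (r + i))) = slab (nfq NF q (Suc i)) (q ! Suc i) (q ! Suc (Suc i))"
        using lab[of "Suc i"] i n_def by simp
      ultimately show "slab (nfq NF q i) (q ! i) (q ! Suc i) < slab (nfq NF q (Suc i)) (q ! Suc i) (q ! Suc (Suc i))"
        using lab[of i] i n_def by simp
    qed
  next
    assume I: "incr NF q"
    show "\<forall>j. r < j \<and> j < r + n - 1 \<longrightarrow> shuffle_label c j < shuffle_label c (Suc j)"
    proof (intro allI impI)
      fix j assume j: "r < j \<and> j < r + n - 1"
      define i where "i = j - Suc r"
      have ji: "j = Suc (r + i)" using j i_def by simp
      have i2: "i + 2 < length q" using j ji n_def by simp
      have "slab (nfq NF q i) (q ! i) (q ! Suc i) < slab (nfq NF q (Suc i)) (q ! Suc i) (q ! Suc (Suc i))"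
        using I i2 unfolding incr_def by blast
      moreover have "shuffle_label c j = slab (nfq NF q i) (q ! i) (q ! Suc i)" using lab[of i] ji i2 n_def by simp
      moreover have "shuffle_label c (Suc j) = slab (nfq NF q (Suc i)) (q ! Suc i) (q ! Suc (Suc i))"
        using lab[of "Suc i"] ji i2 n_def by simp
      ultimately show "shuffle_label c j < shuffle_label c (Suc j)" by simp
    qed
  qed
qed

theorem proposition3p4:
  fixes M N :: nat
  shows "R_star_labeling (shuffle_words M N) (shuffle_le M N) (shuffle_bot M) (shuffle_top N)
           (M + N) shuffle_label"
proof -
  let ?W = "shuffle_words M N" and ?le = "shuffle_le M N" and ?b = "shuffle_bot M" and ?t = "shuffle_top N"
  have C: "C_labeling ?W ?le ?b ?t (M + N) shuffle_label"
    unfolding C_labeling_def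
  proof (intro conjI ballI impI)
    fix c assume "c \<in> max_chains ?W ?le ?b ?t"
    thus "length c = Suc (M + N)" using max_len by (simp add: max_chains_iff)
  next
    fix c c' r assume c: "c \<in> max_chains ?W ?le ?b ?t" and c': "c' \<in> max_chains ?W ?le ?b ?t"
      and r: "r \<in> {1..M + N}" and tk: "take (Suc r) c = take (Suc r) c'"
    have lc: "length c = Suc (M + N)" "length c' = Suc (M + N)" using c c' max_len by (simp_all add: max_chains_iff)
    have eq: "c ! j = c' ! j" if "j \<le> r" for j
    proof -
      have "j < Suc r" using that by simp
      hence "take (Suc r) c ! j = c ! j" "take (Suc r) c' ! j = c' ! j" by simp_all
      thus ?thesis using tk by simp
    qed
    obtain i where ri: "r = Suc i" using r by (cases r) auto
    have "shuffle_label c r = slab (nfq {} c i) (c ! i) (c ! Suc i)" using ri shuffle_label_slab by simp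
    also have "\<dots> = slab (nfq {} c' i) (c' ! i) (c' ! Suc i)"
      using nfq_cong[of i c c' "{}"] eq ri by simp
    also have "\<dots> = shuffle_label c' r" using ri shuffle_label_slab by simp
    finally show "shuffle_label c r = shuffle_label c' r" .
  qed
  have R: "\<forall>p u. cover_chain ?W ?le p \<and> hd p = ?b \<and> u \<in> ?W \<and> ?le (last p) u \<and> last p \<noteq> u \<longrightarrow>
        (\<exists>!q. cover_chain ?W ?le q \<and> hd q = last p \<and> last q = u \<and>
           (\<forall>c\<in>max_chains ?W ?le ?b ?t. take (length p + length q - 1) c = p @ tl q \<longrightarrow>
              (\<forall>j. length p - 1 < j \<and> j < length p + length q - 2 \<longrightarrow>
                  shuffle_label c j < shuffle_label c (Suc j))))"
  proof (intro allI impI)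
    fix p u
    assume H: "cover_chain ?W ?le p \<and> hd p = ?b \<and> u \<in> ?W \<and> ?le (last p) u \<and> last p \<noteq> u"
    have p: "chn M N p" "hd p = ?b" using H cover_chain_iff by blast+
    have pne: "p \<noteq> []" using p by (simp add: chn_def)
    define r where "r = length p - 1"
    define NF where "NF = nfq {} p r"
    have lp: "last p = p ! r" using pne r_def by (simp add: last_conv_nth)
    have NFs: "NF \<subseteq> {k. X k \<in> set (last p)}" using nfq_inv[OF p(1), of r] pne r_def lp NF_def by simp
    have zW: "last p \<in> ?W" using p(1) pne by (auto simp: chn_def)
    have s: "sle M N (last p) u" using le_sle[of M N "last p" u] H zW by blast
    define P where "P = (\<lambda>q. \<forall>c\<in>max_chains ?W ?le ?b ?t. take (length p + length q - 1) c = p @ tl q \<longrightarrow>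
              (\<forall>j. length p - 1 < j \<and> j < length p + length q - 2 \<longrightarrow>
                  shuffle_label c j < shuffle_label c (Suc j)))"
    have PI: "P q \<longleftrightarrow> incr NF q" if q: "chn M N q" "hd q = last p" for q
    proof
      assume Pq: "P q"
      obtain c where c: "chn M N c" "hd c = ?b" "last c = ?t" "take (length p + length q - 1) c = p @ tl q"
        using extend[OF p q] by blast
      have "c \<in> max_chains ?W ?le ?b ?t" using c by (simp add: max_chains_iff)
      hence "\<forall>j. length p - 1 < j \<and> j < length p + length q - 2 \<longrightarrow> shuffle_label c j < shuffle_label c (Suc j)"
        using Pq c(4) unfolding P_def by blast
      thus "incr NF q" using link[OF p(1) q c(1) c(4)] NF_def r_def by simp
    next
      assume I: "incr NF q"
      show "P q" unfolding P_def
      proof (intro ballI impI)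
        fix c assume "c \<in> max_chains ?W ?le ?b ?t" and tk: "take (length p + length q - 1) c = p @ tl q"
        hence c: "chn M N c" by (simp add: max_chains_iff)
        show "\<forall>j. length p - 1 < j \<and> j < length p + length q - 2 \<longrightarrow> shuffle_label c j < shuffle_label c (Suc j)"
          using link[OF p(1) q c tk] I NF_def r_def by simp
      qed
    qed
    obtain q where q: "chn M N q" "hd q = last p" "last q = u" "incr NF q"
      using exist[OF s NFs] by blast
    show "\<exists>!q. cover_chain ?W ?le q \<and> hd q = last p \<and> last q = u \<and> P q" unfolding P_def[symmetric]
    proof (rule ex1I[of _ q])
      show "cover_chain ?W ?le q \<and> hd q = last p \<and> last q = u \<and> P q"
        using q PI[OF q(1,2)] cover_chain_iff by blast
    next
      fix q' assume q': "cover_chain ?W ?le q' \<and> hd q' = last p \<and> last q' = u \<and> P q'"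
      have c': "chn M N q'" using q' cover_chain_iff by blast
      have i': "incr NF q'" using PI[OF c'] q' by blast
      show "q' = q" using uniq[OF q(1) c' _ _ q(4) i'] q q' NFs by simp
    qed
  qed
  show ?thesis unfolding R_star_labeling_def using C R by blast
qed

end
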